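(* Let $k\ge 2$. Let $G$ be one of the following seven graphs, each obtained from a cycle $C_n=v_0v_1\cdots v_{n-1}v_0$ by identifying the vertices within each listed block into one vertex (vertices not in any block are left alone): (1) $G_{4k+2}(\mathscr A,\mathscr B)$: $n=8k+4$, blocks $\{v_{2i},v_{4k+2i+2}\}$ ($0\le i\le 2k$), $\{v_{2j+1},v_{2k+2j+3}\}$ ($0\le j\le k$), $\{v_{4k+2j+5},v_{6k+2j+5}\}$ ($0\le j\le k-1$). (2) $G^1_{4k+1}(\mathscr A,\mathscr B,\mathscr C)$: $n=8k+2$, blocks $\{v_{2i},v_{4k+2i}\}$ ($1\le i\le 2k$), $\{v_{2j+1},v_{4k+2j+3}\}$ ($0\le j\le 2k-1$), $\{v_0,v_{4k+1}\}$. (3) $G^1_{4k+3}(\mathscr A,\mathscr B,\mathscr C)$: $n=8k+6$, blocks $\{v_{2i},v_{4k+2+2i}\}$ ($1\le i\le 2k+1$), $\{v_{2j+1},v_{6k+5+2j}\}$ ($0\le j\le k$), $\{v_{2k+3+2j},v_{4k+5+2j}\}$ ($0\le j\le k-1$), $\{v_0,v_{4k+3}\}$. (4) $G^2_{4k+1}(\mathscr A,\mathscr B,\mathscr C)$: $n=8k+1$, blocks $\{v_{2i},v_{4k+2i}\}$ ($1\le i\le 2k$), $\{v_{2j+1},v_{2k+2j+1}\}$ ($0\le j\le k-1$), $\{v_{4k+2j+1},v_{6k+2j+1}\}$ ($0\le j\le k-1$); $v_0$ is not merged. (5) $G^2_{4k+3}(\mathscr A,\mathscr B,\mathscr C)$: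 $n=8k+5$, blocks $\{v_{2i},v_{4k+2+2i}\}$ ($1\le i\le 2k+1$), $\{v_{2j+1},v_{6k+3+2j}\}$ ($0\le j\le k$), $\{v_{2k+3+2j},v_{4k+3+2j}\}$ ($0\le j\le k-1$); $v_0$ is not merged. (6) $G^3_{4k+1}(\mathscr A,\mathscr B,\mathscr C)$: $n=8k+3$, blocks $\{v_{2i},v_{4k+2i}\}$ ($1\le i\le k$), $\{v_{2k+2i},v_{6k+2+2i}\}$ ($1\le i\le k$), $\{v_{2j+1},v_{8k+1-2j}\}$ ($0\le j\le k-1$), $\{v_{2k+3+2j},v_{4k+3+2j}\}$ ($0\le j\le k-1$), and the three-element block $\{v_0,v_{2k+1},v_{6k+2}\}$. (7) $G^3_{4k+3}(\mathscr A,\mathscr B,\mathscr C)$: $n=8k+7$, blocks $\{v_{2i},v_{4k+4+2i}\}$ ($1\le i\le k$), $\{v_{2k+2+2i},v_{6k+4+2i}\}$ ($1\le i\le k+1$), $\{v_{4j+1},v_{4k+3+2j}\}$ ($0\le j\le k$), $\{v_{4j+3},v_{6k+7+2j}\}$ ($0\le j\le k-1$), and the three-element block $\{v_0,v_{2k+2},v_{6k+5}\}$. Let $e$ be the edge of $G$ that receives label $1$ or the edge that receives label $n$ under the labeling of $G$ inherited from the $C$-labeling of $C_n$ (equivalently, $e$ is the image in $G$ of the edge $v_0v_1$ or of the edge $v_1v_2$). Then $\chi_{la}(G)=\chi_{la}(G-e)=3$.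
   Context: Identifying a set of pairwise nonadjacent vertices means replacing them by one new vertex incident to all edges previously incident to any of them (parallel edges may arise); the edges of the new graph correspond bijectively to the edges of $C_n$, so an edge labeling of $C_n$ is inherited. The $C$-labeling of $C_n=v_0v_1\cdots v_{n-1}v_0$ (indices mod $n$) is $f(v_jv_{j+1})=(j+2)/2$ for even $j$ and $f(v_jv_{j+1})=n-(j-1)/2$ for odd $j$, $0\le j\le n-1$. For a connected (multi)graph $G$ with edge set $E$, $|E|=q$, a local antimagic labeling is a bijection $f:E\to\{1,\dots,q\}$ such that adjacent vertices $x,y$ satisfy $f^+(x)\ne f^+(y)$, where $f^+(x)$ is the sum of labels of edges incident to $x$; $\chi_{la}(G)$ is the minimum number of distinct values of $f^+$ over all local antimagic labelings of $G$. $G-e$ denotes $G$ with the edge $e$ deleted. *)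

theory Defs
  imports Main
begin

(* Cycle C_n = v_0 v_1 ... v_{n-1} v_0: vertex v_i is the natural number i (i < n),
   edge number j (j < n) is v_j v_{(j+1) mod n}.
   Identifying the vertices of each block of a family B of pairwise disjoint sets
   gives the quotient map qmap n B : vertex of C_n -> vertex of G
   (each block is represented by its least element). *)
definition qmap :: "nat \<Rightarrow> nat set set \<Rightarrow> nat \<Rightarrow> nat" where
  "qmap n B i = Min {j. j < n \<and> (j = i \<or> (\<exists>b\<in>B. i \<in> b \<and> j \<in> b))}"

definition end1 :: "nat \<Rightarrow> nat set set \<Rightarrow> nat \<Rightarrow> nat" where
  "end1 n B j = qmap n B j"
definition end2 :: "nat \<Rightarrow> nat set set \<Rightarrow> nat \<Rightarrow> nat" where
  "end2 n B j = qmap n B (Suc j mod n)"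

(* The (multi)graph G is given by n, B, vertex set qmap n B ` {0..<n}
   and an edge set E of edge indices (E = {0..<n} for G, E = {0..<n} - {e} for G - e). *)

definition vsum :: "nat \<Rightarrow> nat set set \<Rightarrow> nat set \<Rightarrow> (nat \<Rightarrow> nat) \<Rightarrow> nat \<Rightarrow> nat" where
  "vsum n B E f x = (\<Sum>j\<in>{j\<in>E. x = end1 n B j \<or> x = end2 n B j}. f j)"

definition local_antimagic :: "nat \<Rightarrow> nat set set \<Rightarrow> nat set \<Rightarrow> (nat \<Rightarrow> nat) \<Rightarrow> bool" where
  "local_antimagic n B E f \<longleftrightarrow>
     bij_betw f E {1..card E} \<and>
     (\<forall>j\<in>E. vsum n B E f (end1 n B j) \<noteq> vsum n B E f (end2 n B j))"

definition chi_la :: "nat \<Rightarrow> nat set set \<Rightarrow> nat set \<Rightarrow> nat" where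
  "chi_la n B E = Inf {card (vsum n B E f ` (qmap n B ` {0..<n})) | f. local_antimagic n B E f}"

definition cLabel :: "nat \<Rightarrow> nat \<Rightarrow> nat" where
  "cLabel n j = (if even j then (j + 2) div 2 else n - (j - 1) div 2)"

definition cyc_n :: "nat \<Rightarrow> nat \<Rightarrow> nat" where
  "cyc_n k t = (if t = 1 then 8*k+4 else if t = 2 then 8*k+2 else if t = 3 then 8*k+6
     else if t = 4 then 8*k+1 else if t = 5 then 8*k+5 else if t = 6 then 8*k+3 else 8*k+7)"

definition blocks :: "nat \<Rightarrow> nat \<Rightarrow> nat set set" where
  "blocks k t =
   (if t = 1 then
      (\<lambda>i. {2*i, 4*k+2*i+2}) ` {0..2*k} \<union> (\<lambda>j. {2*j+1, 2*k+2*j+3}) ` {0..k}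
      \<union> (\<lambda>j. {4*k+2*j+5, 6*k+2*j+5}) ` {0..<k}
    else if t = 2 then
      (\<lambda>i. {2*i, 4*k+2*i}) ` {1..2*k} \<union> (\<lambda>j. {2*j+1, 4*k+2*j+3}) ` {0..<2*k}
      \<union> {{0, 4*k+1}}
    else if t = 3 then
      (\<lambda>i. {2*i, 4*k+2+2*i}) ` {1..2*k+1} \<union> (\<lambda>j. {2*j+1, 6*k+5+2*j}) ` {0..k}
      \<union> (\<lambda>j. {2*k+3+2*j, 4*k+5+2*j}) ` {0..<k} \<union> {{0, 4*k+3}}
    else if t = 4 then
      (\<lambda>i. {2*i, 4*k+2*i}) ` {1..2*k} \<union> (\<lambda>j. {2*j+1, 2*k+2*j+1}) ` {0..<k}
      \<union> (\<lambda>j. {4*k+2*j+1, 6*k+2*j+1}) ` {0..<k}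
    else if t = 5 then
      (\<lambda>i. {2*i, 4*k+2+2*i}) ` {1..2*k+1} \<union> (\<lambda>j. {2*j+1, 6*k+3+2*j}) ` {0..k}
      \<union> (\<lambda>j. {2*k+3+2*j, 4*k+3+2*j}) ` {0..<k}
    else if t = 6 then
      (\<lambda>i. {2*i, 4*k+2*i}) ` {1..k} \<union> (\<lambda>i. {2*k+2*i, 6*k+2+2*i}) ` {1..k}
      \<union> (\<lambda>j. {2*j+1, 8*k+1-2*j}) ` {0..<k} \<union> (\<lambda>j. {2*k+3+2*j, 4*k+3+2*j}) ` {0..<k}
      \<union> {{0, 2*k+1, 6*k+2}}
    else
      (\<lambda>i. {2*i, 4*k+4+2*i}) ` {1..k} \<union> (\<lambda>i. {2*k+2+2*i, 6*k+4+2*i}) ` {1..k+1}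
      \<union> (\<lambda>j. {4*j+1, 4*k+3+2*j}) ` {0..k} \<union> (\<lambda>j. {4*j+3, 6*k+7+2*j}) ` {0..<k}
      \<union> {{0, 2*k+2, 6*k+5}})"

end

theory Submission
  imports Defs
begin

definition prd :: "nat \<Rightarrow> nat \<Rightarrow> nat" where
  "prd n c = (if c = 0 then n - 1 else c - 1)"

definition gE :: "nat set \<Rightarrow> (nat \<Rightarrow> nat) \<Rightarrow> nat \<Rightarrow> nat" where
  "gE E f j = (if j \<in> E then f j else 0)"

definition Rf :: "nat set \<Rightarrow> (nat \<Rightarrow> nat) \<Rightarrow> nat \<Rightarrow> nat set" where
  "Rf C0 pt x = (if x \<in> C0 then C0 else {x, pt x})"

definition good :: "nat \<Rightarrow> nat set set \<Rightarrow> (nat \<Rightarrow> nat set) \<Rightarrow> bool" where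
  "good n B R \<longleftrightarrow> (\<forall>b\<in>B. \<forall>x\<in>b. R x = b) \<and>
     (\<forall>x<n. (R x \<in> B \<or> R x = {x}) \<and> x \<in> R x \<and> R x \<subseteq> {..<n})"

lemma cls_eq:
  assumes "good n B R" "i < n"
  shows "{j. j < n \<and> (j = i \<or> (\<exists>b\<in>B. i \<in> b \<and> j \<in> b))} = R i"
proof -
  have A: "\<forall>b\<in>B. \<forall>x\<in>b. R x = b" and Bx: "(R i \<in> B \<or> R i = {i}) \<and> i \<in> R i \<and> R i \<subseteq> {..<n}"
    using assms by (auto simp: good_def)
  show ?thesis
  proof (intro set_eqI iffI)
    fix j assume "j \<in> {j. j < n \<and> (j = i \<or> (\<exists>b\<in>B. i \<in> b \<and> j \<in> b))}"
    then show "j \<in> R i" using A Bx by auto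
  next
    fix j assume j: "j \<in> R i"
    then have "j < n" using Bx by auto
    moreover have "j = i \<or> (\<exists>b\<in>B. i \<in> b \<and> j \<in> b)"
      using Bx j by auto
    ultimately show "j \<in> {j. j < n \<and> (j = i \<or> (\<exists>b\<in>B. i \<in> b \<and> j \<in> b))}" by auto
  qed
qed

lemma R_cons:
  assumes "good n B R" "i < n" "j \<in> R i"
  shows "R j = R i"
proof -
  have A: "\<forall>b\<in>B. \<forall>x\<in>b. R x = b" and Bx: "(R i \<in> B \<or> R i = {i}) \<and> i \<in> R i \<and> R i \<subseteq> {..<n}"
    using assms by (auto simp: good_def)
  show ?thesis
  proof (cases "R i \<in> B")
    case True
    then show ?thesis using A assms(3) by blast
  next
    case False
    then have "R i = {i}" using Bx by blast
    then show ?thesis using assms(3) by simp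
  qed
qed

lemma R_sub: "good n B R \<Longrightarrow> i < n \<Longrightarrow> R i \<subseteq> {..<n}"
  by (auto simp: good_def)

lemma R_mem: "good n B R \<Longrightarrow> i < n \<Longrightarrow> i \<in> R i"
  by (auto simp: good_def)

lemma qmap_R:
  assumes "good n B R" "i < n"
  shows "qmap n B i = Min (R i)"
  unfolding qmap_def cls_eq[OF assms] ..

lemma qmap_eq_iff:
  assumes "good n B R" "i < n" "j < n"
  shows "qmap n B i = qmap n B j \<longleftrightarrow> j \<in> R i"
proof
  assume "j \<in> R i"
  then show "qmap n B i = qmap n B j" using assms qmap_R R_cons by metis
next
  assume q: "qmap n B i = qmap n B j"
  have fi: "finite (R i)" "R i \<noteq> {}" using R_sub[OF assms(1,2)] R_mem[OF assms(1,2)]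
    by (auto intro: finite_subset)
  have fj: "finite (R j)" "R j \<noteq> {}" using R_sub[OF assms(1,3)] R_mem[OF assms(1,3)]
    by (auto intro: finite_subset)
  define m where "m = Min (R i)"
  have m1: "m \<in> R i" using fi Min_in m_def by auto
  have m2: "m \<in> R j" using fj Min_in q qmap_R assms m_def by metis
  have mn: "m < n" using m1 R_sub[OF assms(1,2)] by auto
  have "R m = R i" using R_cons[OF assms(1,2) m1] .
  moreover have "R m = R j" using R_cons[OF assms(1,3) m2] .
  ultimately show "j \<in> R i" using R_mem[OF assms(1,3)] by auto
qed

lemma prd_lt: "0 < n \<Longrightarrow> c < n \<Longrightarrow> prd n c < n"
  by (auto simp: prd_def)

lemma Suc_mod_prd: "j < n \<Longrightarrow> c < n \<Longrightarrow> (Suc j mod n = c) \<longleftrightarrow> (j = prd n c)"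
  unfolding prd_def
  by (cases "Suc j = n") auto

lemma inj_prd: "inj_on (prd n) {..<n}"
  by (auto simp: inj_on_def prd_def split: if_splits)

lemma vsum_R:
  assumes g: "good n B R" and i: "i < n" and E: "E \<subseteq> {..<n}"
    and NL: "\<forall>c\<in>R i. prd n c \<notin> R i"
  shows "vsum n B E f (qmap n B i) = (\<Sum>c\<in>R i. gE E f c + gE E f (prd n c))"
proof -
  have n0: "0 < n" using i by auto
  have Rs: "R i \<subseteq> {..<n}" using R_sub[OF g i] .
  have fin: "finite (R i)" using Rs finite_subset by auto
  have set1: "{j\<in>E. qmap n B i = end1 n B j \<or> qmap n B i = end2 n B j}
      = E \<inter> (R i \<union> prd n ` R i)"
  proof (intro set_eqI iffI)
    fix j assume "j \<in> {j\<in>E. qmap n B i = end1 n B j \<or> qmap n B i = end2 n B j}"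
    then have jE: "j \<in> E" and d: "qmap n B i = qmap n B j \<or> qmap n B i = qmap n B (Suc j mod n)"
      by (auto simp: end1_def end2_def)
    have jn: "j < n" using jE E by auto
    have sn: "Suc j mod n < n" using n0 by auto
    from d have "j \<in> R i \<or> Suc j mod n \<in> R i"
      using qmap_eq_iff[OF g i jn] qmap_eq_iff[OF g i sn] by auto
    then have "j \<in> R i \<or> j \<in> prd n ` R i"
    proof
      assume "Suc j mod n \<in> R i"
      then have "j = prd n (Suc j mod n)" using Suc_mod_prd[OF jn sn] by auto
      then show ?thesis using \<open>Suc j mod n \<in> R i\<close> by auto
    qed auto
    then show "j \<in> E \<inter> (R i \<union> prd n ` R i)" using jE by auto
  next
    fix j assume j: "j \<in> E \<inter> (R i \<union> prd n ` R i)"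
    then have jE: "j \<in> E" and jn: "j < n" using E by auto
    have sn: "Suc j mod n < n" using n0 by auto
    from j have "j \<in> R i \<or> Suc j mod n \<in> R i"
    proof (elim IntE UnE)
      assume "j \<in> prd n ` R i"
      then obtain c where c: "c \<in> R i" "j = prd n c" by auto
      have "c < n" using c Rs by auto
      then have "Suc j mod n = c" using Suc_mod_prd[OF jn] c by auto
      then show ?thesis using c by auto
    qed auto
    then have "qmap n B i = qmap n B j \<or> qmap n B i = qmap n B (Suc j mod n)"
      using qmap_eq_iff[OF g i jn] qmap_eq_iff[OF g i sn] by auto
    then show "j \<in> {j\<in>E. qmap n B i = end1 n B j \<or> qmap n B i = end2 n B j}"
      using jE by (auto simp: end1_def end2_def)
  qed
  have "vsum n B E f (qmap n B i) = (\<Sum>j\<in>E \<inter> (R i \<union> prd n ` R i). f j)"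
    unfolding vsum_def set1 ..
  also have "\<dots> = (\<Sum>j\<in>R i \<union> prd n ` R i. gE E f j)"
  proof -
    have "finite (R i \<union> prd n ` R i)" using fin by auto
    then have "(\<Sum>j\<in>(R i \<union> prd n ` R i) \<inter> E. f j) = (\<Sum>j\<in>R i \<union> prd n ` R i. gE E f j)"
      by (simp add: gE_def sum.inter_restrict)
    then show ?thesis by (simp add: Int_commute)
  qed
  also have "\<dots> = (\<Sum>j\<in>R i. gE E f j) + (\<Sum>j\<in>prd n ` R i. gE E f j)"
    using fin NL by (intro sum.union_disjoint) auto
  also have "(\<Sum>j\<in>prd n ` R i. gE E f j) = (\<Sum>j\<in>R i. gE E f (prd n j))"
    using inj_on_subset[OF inj_prd Rs] by (simp add: sum.reindex)
  finally show ?thesis by (simp add: sum.distrib)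
qed

lemma proper:
  assumes "local_antimagic n B E f" "j \<in> E"
  shows "vsum n B E f (qmap n B j) \<noteq> vsum n B E f (qmap n B (Suc j mod n))"
  using assms unfolding local_antimagic_def end1_def end2_def by auto

definition fam :: "nat \<Rightarrow> nat set set \<Rightarrow> nat set \<Rightarrow> (nat \<Rightarrow> nat) \<Rightarrow> bool" where
  "fam n B C0 pt \<longleftrightarrow> 2 \<le> n \<and>
    (\<forall>b\<in>B. \<forall>x\<in>b. Rf C0 pt x = b) \<and>
    (\<forall>x<n. x \<notin> C0 \<longrightarrow> (\<exists>b\<in>B. x \<in> b)) \<and> (C0 \<in> B \<or> C0 = {0}) \<and>
    0 \<in> C0 \<and> C0 \<subseteq> {..<n} \<and> (\<forall>c\<in>C0. prd n c \<notin> C0) \<and>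
    (\<forall>x<n. x \<notin> C0 \<longrightarrow> pt x \<noteq> x \<and> pt x \<noteq> 0 \<and> pt x < n \<and> (even (pt x) \<longleftrightarrow> even x))"

lemma famD:
  assumes "fam n B C0 pt"
  shows "2 \<le> n" "\<forall>b\<in>B. \<forall>x\<in>b. Rf C0 pt x = b"
    "\<forall>x<n. x \<notin> C0 \<longrightarrow> (\<exists>b\<in>B. x \<in> b)" "C0 \<in> B \<or> C0 = {0}"
    "0 \<in> C0" "C0 \<subseteq> {..<n}" "\<forall>c\<in>C0. prd n c \<notin> C0"
    "\<forall>x<n. x \<notin> C0 \<longrightarrow> pt x \<noteq> x \<and> pt x \<noteq> 0 \<and> pt x < n \<and> (even (pt x) \<longleftrightarrow> even x)"
  using assms unfolding fam_def by blast+

lemma fam_good: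
  assumes "fam n B C0 pt"
  shows "good n B (Rf C0 pt)"
  unfolding good_def
proof (intro conjI allI impI ballI)
  fix b x assume "b \<in> B" "x \<in> b" then show "Rf C0 pt x = b" using assms by (auto dest: famD)
next
  fix x assume x: "x < n"
  show "Rf C0 pt x \<in> B \<or> Rf C0 pt x = {x}"
  proof (cases "x \<in> C0")
    case True
    then show ?thesis using assms by (auto simp: Rf_def dest: famD)
  next
    case False
    then obtain b where "b \<in> B" "x \<in> b" using assms x by (auto dest: famD)
    then have "Rf C0 pt x = b" using assms by (auto dest: famD)
    then show ?thesis using \<open>b \<in> B\<close> by auto
  qed
  show "x \<in> Rf C0 pt x" by (auto simp: Rf_def)
  show "Rf C0 pt x \<subseteq> {..<n}" using assms x by (auto simp: Rf_def dest: famD)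
qed

lemma par_ne: "(even (a::nat) \<longleftrightarrow> even b) \<Longrightarrow> 0 < a \<Longrightarrow> a - 1 \<noteq> b"
proof
  assume "even a \<longleftrightarrow> even b" "0 < a" "a - 1 = b"
  then have "a = Suc b" "even a \<longleftrightarrow> even b" by auto
  then show False by auto
qed

lemma fam_NL:
  assumes "fam n B C0 pt" "i < n"
  shows "\<forall>c\<in>Rf C0 pt i. prd n c \<notin> Rf C0 pt i"
proof (cases "i \<in> C0")
  case True
  then show ?thesis using assms by (auto simp: Rf_def dest: famD)
next
  case False
  have i0: "i \<noteq> 0" using False famD(5)[OF assms(1)] by metis
  have p: "pt i \<noteq> 0" "even (pt i) \<longleftrightarrow> even i" "pt i \<noteq> i"
    using False assms famD(8)[OF assms(1)] by auto
  have R: "Rf C0 pt i = {i, pt i}" using False by (simp add: Rf_def)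
  have "prd n i = i - 1" "prd n (pt i) = pt i - 1" using i0 p by (auto simp: prd_def)
  moreover have "i - 1 \<noteq> i" "i - 1 \<noteq> pt i" "pt i - 1 \<noteq> pt i" "pt i - 1 \<noteq> i"
    using i0 p par_ne[of i "pt i"] par_ne[of "pt i" i] by auto
  ultimately show ?thesis unfolding R by auto
qed

lemma fam_vsum:
  assumes "fam n B C0 pt" "i < n" "E \<subseteq> {..<n}"
  shows "vsum n B E f (qmap n B i) = (\<Sum>c\<in>Rf C0 pt i. gE E f c + gE E f (prd n c))"
  using vsum_R[OF fam_good[OF assms(1)] assms(2,3) fam_NL[OF assms(1,2)]] .

lemma fam_vsum_pair:
  assumes "fam n B C0 pt" "i < n" "E \<subseteq> {..<n}" "i \<notin> C0"
  shows "vsum n B E f (qmap n B i) = (gE E f i + gE E f (prd n i)) + (gE E f (pt i) + gE E f (prd n (pt i)))"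
proof -
  have "pt i \<noteq> i" using assms by (auto dest: famD)
  then show ?thesis using fam_vsum[OF assms(1-3)] assms(4) by (simp add: Rf_def)
qed

lemma fam_vsum_C0:
  assumes "fam n B C0 pt" "i < n" "E \<subseteq> {..<n}" "i \<in> C0"
  shows "vsum n B E f (qmap n B i) = (\<Sum>c\<in>C0. gE E f c + gE E f (prd n c))"
  using fam_vsum[OF assms(1-3)] assms(4) by (simp add: Rf_def)

lemma fam_qmap_eq:
  assumes "fam n B C0 pt" "i < n" "j < n" "j \<in> Rf C0 pt i"
  shows "qmap n B i = qmap n B j"
  using qmap_eq_iff[OF fam_good[OF assms(1)] assms(2,3)] assms(4) by auto

lemma card3: "card {a, b, c::nat} \<le> 3"
  by (simp add: card_insert_if)

lemma upper:
  assumes F: "fam n B C0 pt" and E: "E \<subseteq> {..<n}"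
    and Hev: "\<And>c. 1 \<le> c \<Longrightarrow> c < n \<Longrightarrow> even c \<Longrightarrow> gE E f c + gE E f (prd n c) = Ve"
    and Hod: "\<And>c. c < n \<Longrightarrow> odd c \<Longrightarrow> gE E f c + gE E f (prd n c) = Vo"
    and Z: "(\<Sum>c\<in>C0. gE E f c + gE E f (prd n c)) = Z"
    and d: "Z \<noteq> 2*Ve" "Z \<noteq> 2*Vo" "Ve \<noteq> Vo"
    and bij: "bij_betw f E {1..card E}"
  shows "local_antimagic n B E f \<and> card (vsum n B E f ` qmap n B ` {0..<n}) \<le> 3"
proof -
  define S where "S i = vsum n B E f (qmap n B i)" for i
  have n2: "2 \<le> n" using F by (auto dest: famD)
  have ST: "\<And>x. x < n \<Longrightarrow> x \<notin> C0 \<Longrightarrow> pt x \<noteq> x \<and> pt x \<noteq> 0 \<and> pt x < n \<and> (even (pt x) \<longleftrightarrow> even x)"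
    using F by (auto dest: famD)
  have C00: "0 \<in> C0" and C0NL: "\<forall>c\<in>C0. prd n c \<notin> C0" using F by (auto dest: famD)
  have SV: "S i = (if i \<in> C0 then Z else if even i then 2*Ve else 2*Vo)" if i: "i < n" for i
  proof (cases "i \<in> C0")
    case True
    then show ?thesis using fam_vsum_C0[OF F i E] Z by (simp add: S_def)
  next
    case False
    have i0: "i \<noteq> 0" using False C00 by metis
    have p: "pt i \<noteq> 0" "pt i < n" "even (pt i) \<longleftrightarrow> even i" using ST[OF i False] by auto
    show ?thesis
    proof (cases "even i")
      case True
      have "gE E f i + gE E f (prd n i) = Ve" using Hev[of i] True i i0 by auto
      moreover have "gE E f (pt i) + gE E f (prd n (pt i)) = Ve" using Hev[of "pt i"] True p by auto
      ultimately show ?thesis using fam_vsum_pair[OF F i E False] False True by (simp add: S_def)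
    next
      case False2: False
      have "gE E f i + gE E f (prd n i) = Vo" using Hod[of i] False2 i by auto
      moreover have "gE E f (pt i) + gE E f (prd n (pt i)) = Vo" using Hod[of "pt i"] False2 p by auto
      ultimately show ?thesis using fam_vsum_pair[OF F i E False] False False2 by (simp add: S_def)
    qed
  qed
  have prp: "S j \<noteq> S (Suc j mod n)" if j: "j \<in> E" for j
  proof -
    have jn: "j < n" using j E by auto
    show ?thesis
    proof (cases "Suc j = n")
      case True
      then have s0: "Suc j mod n = 0" by auto
      have "j \<notin> C0"
      proof
        assume "j \<in> C0"
        moreover have "prd n 0 = j" using True by (simp add: prd_def)
        ultimately show False using C0NL C00 by auto
      qed
      then show ?thesis using SV[OF jn] SV[of 0] s0 C00 n2 d by auto
    next
      case False
      then have s: "Suc j mod n = Suc j" "Suc j < n" using jn by auto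
      have "\<not> (j \<in> C0 \<and> Suc j \<in> C0)"
      proof
        assume "j \<in> C0 \<and> Suc j \<in> C0"
        moreover have "prd n (Suc j) = j" by (simp add: prd_def)
        ultimately show False using C0NL by auto
      qed
      then show ?thesis using SV[OF jn] SV[OF s(2)] s d by auto
    qed
  qed
  have la: "local_antimagic n B E f"
    unfolding local_antimagic_def end1_def end2_def using bij prp by (auto simp: S_def)
  have "vsum n B E f ` qmap n B ` {0..<n} \<subseteq> {Z, 2*Ve, 2*Vo}"
    using SV by (auto simp: S_def)
  then have "card (vsum n B E f ` qmap n B ` {0..<n}) \<le> card {Z, 2*Ve, 2*Vo}"
    by (intro card_mono) auto
  then show ?thesis using la card3 by (meson le_trans)
qed

lemma two_vals:
  assumes "finite A" "card A \<le> 2"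
  shows "\<exists>a b. A \<subseteq> {a, b}"
proof -
  have "card A = 0 \<or> card A = 1 \<or> card A = 2" using assms(2) by auto
  then show ?thesis
  proof (elim disjE)
    assume "card A = 0" then have "A = {}" using assms(1) by auto
    then show ?thesis by auto
  next
    assume "card A = 1" then obtain a where "A = {a}" using card_1_singletonE by blast
    then show ?thesis by auto
  next
    assume "card A = 2" then obtain a b where "A = {a, b}" unfolding card_2_iff by blast
    then show ?thesis by auto
  qed
qed

lemma chi3:
  assumes ex: "local_antimagic n B E f0" "card (vsum n B E f0 ` qmap n B ` {0..<n}) \<le> 3"
    and low: "\<And>f a b. local_antimagic n B E f \<Longrightarrow> \<forall>i<n. vsum n B E f (qmap n B i) \<in> {a, b} \<Longrightarrow> False"
  shows "chi_la n B E = 3"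
proof -
  have ge: "3 \<le> card (vsum n B E f ` qmap n B ` {0..<n})" if la: "local_antimagic n B E f" for f
  proof (rule ccontr)
    assume "\<not> 3 \<le> card (vsum n B E f ` qmap n B ` {0..<n})"
    then have "card (vsum n B E f ` qmap n B ` {0..<n}) \<le> 2" by auto
    then obtain a b where "vsum n B E f ` qmap n B ` {0..<n} \<subseteq> {a, b}"
      using two_vals by blast
    then have "\<forall>i<n. vsum n B E f (qmap n B i) \<in> {a, b}"
      unfolding image_subset_iff by auto
    then show False using low la by blast
  qed
  have eq3: "card (vsum n B E f0 ` qmap n B ` {0..<n}) = 3" using ge[OF ex(1)] ex(2) by auto
  show ?thesis unfolding chi_la_def
  proof (rule cInf_eq_minimum)
    show "3 \<in> {card (vsum n B E f ` qmap n B ` {0..<n}) |f. local_antimagic n B E f}"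
      using eq3 ex(1) by force
  next
    fix x assume "x \<in> {card (vsum n B E f ` qmap n B ` {0..<n}) |f. local_antimagic n B E f}"
    then show "3 \<le> x" using ge by auto
  qed
qed

lemma alt_vals:
  fixes S :: "nat \<Rightarrow> nat"
  assumes vals: "\<forall>i<n. S i \<in> {a, b}"
    and adj: "\<And>j. 2 \<le> j \<Longrightarrow> Suc j < n \<Longrightarrow> S j \<noteq> S (Suc j)"
    and n: "4 \<le> n"
  shows "\<And>i. 2 \<le> i \<Longrightarrow> i < n \<Longrightarrow> S i = (if even i then S 2 else S 3)"
proof -
  have d23: "S 2 \<noteq> S 3" using adj[of 2] n by auto
  fix i assume "2 \<le> i" "i < n"
  then show "S i = (if even i then S 2 else S 3)"
  proof (induction i rule: dec_induct)
    case base then show ?case by simp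
  next
    case (step m)
    have m: "Suc m < n" using step by auto
    have IH: "S m = (if even m then S 2 else S 3)" using step by auto
    have ne: "S m \<noteq> S (Suc m)" using adj[of m] step by auto
    have v: "S m \<in> {a,b}" "S (Suc m) \<in> {a,b}" "S 2 \<in> {a,b}" "S 3 \<in> {a,b}"
      using vals m n by auto
    show ?case using IH ne v d23 by auto
  qed
qed

lemma core:
  fixes S :: "nat \<Rightarrow> nat"
  assumes la: "local_antimagic n B E f"
    and E: "E \<subseteq> {..<n}" "\<And>j. 2 \<le> j \<Longrightarrow> j < n \<Longrightarrow> j \<in> E"
    and n: "4 \<le> n"
    and Sdef: "\<And>i. S i = vsum n B E f (qmap n B i)"
    and v: "\<forall>i<n. S i \<in> {a, b}"
  shows "\<And>i. 2 \<le> i \<Longrightarrow> i < n \<Longrightarrow> S i = (if even i then S 2 else S 3)"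
    and "S 2 \<noteq> S 3" and "S 0 \<noteq> S (n - 1)" and "S 0 \<in> {S 2, S 3}" and "S 1 \<in> {S 2, S 3}"
    and "0 \<in> E \<Longrightarrow> S 0 \<noteq> S 1" and "1 \<in> E \<Longrightarrow> S 1 \<noteq> S 2"
proof -
  have pr: "S j \<noteq> S (Suc j mod n)" if "j \<in> E" for j
    using proper[OF la that] by (simp add: Sdef)
  have adj: "S j \<noteq> S (Suc j)" if "2 \<le> j" "Suc j < n" for j
    using pr[of j] E(2)[of j] that by auto
  show alt: "\<And>i. 2 \<le> i \<Longrightarrow> i < n \<Longrightarrow> S i = (if even i then S 2 else S 3)"
    using alt_vals[OF v adj n] by blast
  show d23: "S 2 \<noteq> S 3" using adj[of 2] n by auto
  have "n - 1 \<in> E" using E(2)[of "n - 1"] n by auto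
  then have "S (n - 1) \<noteq> S (Suc (n - 1) mod n)" using pr by blast
  moreover have "Suc (n - 1) mod n = 0" using n by auto
  ultimately show "S 0 \<noteq> S (n - 1)" by auto
  have v23: "S 2 \<in> {a, b}" "S 3 \<in> {a, b}" "S 0 \<in> {a,b}" "S 1 \<in> {a,b}" using v n by auto
  show "S 0 \<in> {S 2, S 3}" using v23 d23 by auto
  show "S 1 \<in> {S 2, S 3}" using v23 d23 by auto
  show "0 \<in> E \<Longrightarrow> S 0 \<noteq> S 1" using pr[of 0] n by auto
  have "Suc 1 mod n = 2" using n by simp
  then show "1 \<in> E \<Longrightarrow> S 1 \<noteq> S 2" using pr[of 1] by simp
qed

lemma cLabel_even: "even c \<Longrightarrow> cLabel n c = c div 2 + 1"
  by (auto simp: cLabel_def)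
lemma cLabel_odd: "odd c \<Longrightarrow> cLabel n c = n - (c - 1) div 2"
  by (auto simp: cLabel_def)

lemma H0_ev:
  assumes "1 \<le> c" "c < n" "even c"
  shows "gE {0..<n} (cLabel n) c + gE {0..<n} (cLabel n) (prd n c) = n + 2"
proof -
  obtain m where m: "c = 2*m" "1 \<le> m" using assms by (auto elim!: evenE)
  have "prd n c = 2*(m-1) + 1" using m by (simp add: prd_def)
  then show ?thesis using m assms
    by (simp add: gE_def cLabel_even cLabel_odd)
qed

lemma H0_od:
  assumes "c < n" "odd c"
  shows "gE {0..<n} (cLabel n) c + gE {0..<n} (cLabel n) (prd n c) = n + 1"
proof -
  obtain m where m: "c = 2*m+1" using assms by (auto elim!: oddE)
  have "prd n c = 2*m" using m by (simp add: prd_def)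
  then show ?thesis using m assms
    by (simp add: gE_def cLabel_even cLabel_odd)
qed

lemma H1_ev:
  assumes "1 \<le> c" "c < n" "even c"
  shows "gE ({0..<n}-{0}) (\<lambda>j. cLabel n j - 1) c + gE ({0..<n}-{0}) (\<lambda>j. cLabel n j - 1) (prd n c) = n"
proof -
  obtain m where m: "c = 2*m" "1 \<le> m" using assms by (auto elim!: evenE)
  have "prd n c = 2*(m-1) + 1" using m by (simp add: prd_def)
  then show ?thesis using m assms
    by (simp add: gE_def cLabel_even cLabel_odd)
qed

lemma H1_od:
  assumes "c < n" "odd c"
  shows "gE ({0..<n}-{0}) (\<lambda>j. cLabel n j - 1) c + gE ({0..<n}-{0}) (\<lambda>j. cLabel n j - 1) (prd n c) = n - 1"
proof -
  obtain m where m: "c = 2*m+1" using assms by (auto elim!: oddE)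
  have "prd n c = 2*m" using m by (simp add: prd_def)
  then show ?thesis using m assms
    by (simp add: gE_def cLabel_even cLabel_odd)
qed

lemma H2_ev:
  assumes "1 \<le> c" "c < n" "even c"
  shows "gE ({0..<n}-{1}) (\<lambda>j. n - cLabel n j) c + gE ({0..<n}-{1}) (\<lambda>j. n - cLabel n j) (prd n c) = n - 2"
proof -
  obtain m where m: "c = 2*m" "1 \<le> m" using assms by (auto elim!: evenE)
  have "prd n c = 2*(m-1) + 1" using m by (simp add: prd_def)
  then show ?thesis using m assms
    by (cases "m = 1") (simp_all add: gE_def cLabel_even cLabel_odd)
qed

lemma H2_od:
  assumes "c < n" "odd c"
  shows "gE ({0..<n}-{1}) (\<lambda>j. n - cLabel n j) c + gE ({0..<n}-{1}) (\<lambda>j. n - cLabel n j) (prd n c) = n - 1"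
proof -
  obtain m where m: "c = 2*m+1" using assms by (auto elim!: oddE)
  have "prd n c = 2*m" using m by (simp add: prd_def)
  then show ?thesis using m assms
    by (cases "m = 0") (simp_all add: gE_def cLabel_even cLabel_odd)
qed

lemma cLabel_inj: "inj_on (cLabel n) {0..<n}"
proof (rule inj_onI)
  fix a b assume a: "a \<in> {0..<n}" and b: "b \<in> {0..<n}" and e: "cLabel n a = cLabel n b"
  have mix: False if h: "even x" "odd y" "x < n" "y < n" "cLabel n x = cLabel n y" for x y
  proof -
    obtain p where p: "x = 2*p" using h(1) by (auto elim!: evenE)
    obtain q where q: "y = 2*q+1" using h(2) by (auto elim!: oddE)
    have "p + 1 = n - q" using h p q by (simp add: cLabel_even cLabel_odd)
    then show False using p q h by simp
  qed
  show "a = b"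
  proof (cases "even a")
    case True
    show ?thesis
    proof (cases "even b")
      case True
      then show ?thesis using \<open>even a\<close> e by (auto simp: cLabel_even elim!: evenE)
    next
      case False
      then show ?thesis using mix[of a b] \<open>even a\<close> e a b by auto
    qed
  next
    case False
    show ?thesis
    proof (cases "even b")
      case True
      then show ?thesis using mix[of b a] False e a b by auto
    next
      case False2: False
      obtain p where p: "a = 2*p+1" using False by (auto elim!: oddE)
      obtain q where q: "b = 2*q+1" using False2 by (auto elim!: oddE)
      have "n - p = n - q" using e p q by (simp add: cLabel_odd)
      then show ?thesis using p q a b by simp
    qed
  qed
qed

lemma cLabel_img: "cLabel n ` {0..<n} \<subseteq> {1..n}"
  unfolding cLabel_def by auto

lemma cLabel_bij: "bij_betw (cLabel n) {0..<n} {1..n}"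
proof -
  have "card (cLabel n ` {0..<n}) = card {1..n}"
    using card_image[OF cLabel_inj] by simp
  then have "cLabel n ` {0..<n} = {1..n}"
    using cLabel_img by (intro card_subset_eq) auto
  then show ?thesis using cLabel_inj by (simp add: bij_betw_def)
qed

lemma L0_bij: "bij_betw (cLabel n) {0..<n} {1..card {0..<n}}"
  using cLabel_bij by simp

lemma L1_bij:
  assumes "1 \<le> n"
  shows "bij_betw (\<lambda>j. cLabel n j - 1) ({0..<n}-{0}) {1..card ({0..<n}-{0})}"
proof -
  have c0: "cLabel n 0 = 1" by (simp add: cLabel_def)
  have "cLabel n ` ({0..<n}-{0}) = {1..n} - {1}"
    using inj_on_image_set_diff[OF cLabel_inj, of "{0..<n}" "{0}"] cLabel_bij c0 assms
    by (auto simp: bij_betw_def)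
  then have "bij_betw (cLabel n) ({0..<n}-{0}) ({1..n} - {1})"
    by (intro bij_betw_subset[OF cLabel_bij]) auto
  moreover have "bij_betw (\<lambda>x. x - 1) ({1..n} - {1}) {1..n-1}"
    by (rule bij_betw_byWitness[where f' = "\<lambda>x. x + 1"]) auto
  ultimately have "bij_betw ((\<lambda>x. x - 1) \<circ> cLabel n) ({0..<n}-{0}) {1..n-1}"
    by (rule bij_betw_trans)
  moreover have "card ({0..<n}-{0}) = n - 1" using assms by auto
  ultimately show ?thesis by (simp add: comp_def)
qed

lemma L2_bij:
  assumes "2 \<le> n"
  shows "bij_betw (\<lambda>j. n - cLabel n j) ({0..<n}-{1}) {1..card ({0..<n}-{1})}"
proof -
  have c1: "cLabel n 1 = n" by (simp add: cLabel_def)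
  have "cLabel n ` ({0..<n}-{1}) = {1..n} - {n}"
    using inj_on_image_set_diff[OF cLabel_inj, of "{0..<n}" "{1}"] cLabel_bij c1 assms
    by (auto simp: bij_betw_def)
  then have "bij_betw (cLabel n) ({0..<n}-{1}) ({1..n} - {n})"
    by (intro bij_betw_subset[OF cLabel_bij]) auto
  moreover have "bij_betw (\<lambda>x. n - x) ({1..n} - {n}) {1..n-1}"
    by (rule bij_betw_byWitness[where f' = "\<lambda>x. n - x"]) auto
  ultimately have "bij_betw ((\<lambda>x. n - x) \<circ> cLabel n) ({0..<n}-{1}) {1..n-1}"
    by (rule bij_betw_trans)
  moreover have "card ({0..<n}-{1}) = n - 1" using assms by auto
  ultimately show ?thesis by (simp add: comp_def)
qed

lemma sum_split: fixes a b :: nat shows "(\<Sum>m<a+b. F m) = (\<Sum>m<a. F m) + (\<Sum>m<b. (F (a+m)::nat))"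
  by (induction b) (auto simp: add.assoc)

lemma sum_pairs: fixes N :: nat shows "(\<Sum>j<2*N. g j) = (\<Sum>m<N. g (2*m) + (g (2*m+1)::nat))"
  by (induction N) (auto simp: add.assoc)

lemma even_H:
  assumes "n = 2*N" "1 \<le> N"
  shows "(\<Sum>m<N. g (2*m) + g (prd n (2*m))) = (\<Sum>j<n. (g j::nat))"
proof -
  obtain M where M: "N = Suc M" using assms by (cases N) auto
  have "(\<Sum>m<N. g (prd n (2*m))) = g (n - 1) + (\<Sum>m<M. g (prd n (2*Suc m)))"
    unfolding M sum.lessThan_Suc_shift by (simp add: prd_def)
  also have "(\<Sum>m<M. g (prd n (2*Suc m))) = (\<Sum>m<M. g (2*m+1))"
    by (simp add: prd_def)
  also have "g (n - 1) + (\<Sum>m<M. g (2*m+1)) = (\<Sum>m<N. g (2*m+1))"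
    using assms M by simp
  finally have "(\<Sum>m<N. g (prd n (2*m))) = (\<Sum>m<N. g (2*m+1))" .
  then show ?thesis using assms(1) by (simp add: sum.distrib sum_pairs)
qed

lemma odd_H:
  assumes "n = 2*N"
  shows "(\<Sum>m<N. g (2*m+1) + g (prd n (2*m+1))) = (\<Sum>j<n. (g j::nat))"
  using assms by (simp add: prd_def sum_pairs add.commute)

lemma sum_gE:
  assumes "E \<subseteq> {..<n}"
  shows "(\<Sum>j<n. gE E f j) = (\<Sum>j\<in>E. f j)"
proof -
  have "(\<Sum>j<n. gE E f j) = (\<Sum>j\<in>{..<n} \<inter> E. f j)"
    by (simp add: gE_def sum.inter_restrict)
  also have "{..<n} \<inter> E = E" using assms by auto
  finally show ?thesis .
qed

lemma bij_sum:
  fixes f :: "'a \<Rightarrow> nat"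
  assumes "bij_betw f E {1..q}"
  shows "(\<Sum>j\<in>E. f j) = q * (q + 1) div 2"
proof -
  have "(\<Sum>j\<in>E. f j) = (\<Sum>x\<in>{1..q}. x)"
    using sum.reindex_bij_betw[OF assms, of id] by simp
  also have "\<dots> = (\<Sum>x\<in>{0..q}. x)"
  proof -
    have "(\<Sum>x\<in>{0..q}. x) = 0 + (\<Sum>x\<in>{Suc 0..q}. x)" by (rule sum.atLeast_Suc_atMost) simp
    then show ?thesis by simp
  qed
  also have "\<dots> = q * (q + 1) div 2" using gauss_sum_nat by simp
  finally show ?thesis .
qed

lemma fam_vsum2:
  assumes "fam n B C0 pt" "i < n" "E \<subseteq> {..<n}" "Rf C0 pt i = {a, c}" "a \<noteq> c"
  shows "vsum n B E f (qmap n B i) = (gE E f a + gE E f (prd n a)) + (gE E f c + gE E f (prd n c))"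
  using fam_vsum[OF assms(1-3), of f] assms(4,5) by simp

lemma cLabel_last_even: "even n \<Longrightarrow> 2 \<le> n \<Longrightarrow> cLabel n (n - 1) = n div 2 + 1"
  by (auto simp: cLabel_def)
lemma cLabel_last_odd: "odd n \<Longrightarrow> cLabel n (n - 1) = (n + 1) div 2"
  by (auto simp: cLabel_def)

lemma Z0_L0: "2 \<le> n \<Longrightarrow> gE {0..<n} (cLabel n) 0 + gE {0..<n} (cLabel n) (prd n 0) = 1 + cLabel n (n - 1)"
  by (simp add: gE_def prd_def cLabel_def)
lemma Z0_L1: "2 \<le> n \<Longrightarrow> gE ({0..<n}-{0}) (\<lambda>j. cLabel n j - 1) 0 + gE ({0..<n}-{0}) (\<lambda>j. cLabel n j - 1) (prd n 0) = cLabel n (n - 1) - 1"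
  by (simp add: gE_def prd_def)
lemma Z0_L2: "3 \<le> n \<Longrightarrow> gE ({0..<n}-{1}) (\<lambda>j. n - cLabel n j) 0 + gE ({0..<n}-{1}) (\<lambda>j. n - cLabel n j) (prd n 0) = (n - 1) + (n - cLabel n (n - 1))"
  by (simp add: gE_def prd_def cLabel_def)

lemma sum2: "a \<noteq> b \<Longrightarrow> (\<Sum>c\<in>{a, b}. (H c::nat)) = H a + H b"
  by simp
lemma sum3: "a \<noteq> b \<Longrightarrow> a \<noteq> c \<Longrightarrow> b \<noteq> c \<Longrightarrow> (\<Sum>c\<in>{a, b, c}. (H c::nat)) = H a + H b + H c"
  by (simp add: add.assoc)

lemma img_ok:
  assumes "\<And>i. i \<in> A \<Longrightarrow> R (f i) = {f i, g i}" "\<And>i. i \<in> A \<Longrightarrow> R (g i) = {f i, g i}"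
  shows "\<forall>b\<in>(\<lambda>i. {f i, g i}) ` A. \<forall>x\<in>b. R x = b"
  using assms by auto

lemma cov_f: "x = f i \<Longrightarrow> i \<in> A \<Longrightarrow> \<exists>b\<in>(\<lambda>i. {f i, g i}) ` A. x \<in> b"
  by auto
lemma cov_g: "x = g i \<Longrightarrow> i \<in> A \<Longrightarrow> \<exists>b\<in>(\<lambda>i. {f i, g i}) ` A. x \<in> b"
  by auto

lemma Zpair:
  assumes "a \<noteq> 0" "G 0 + G (prd n 0) = z0" "G a + G (prd n a) = za" "z0 + za = Z"
  shows "(\<Sum>c\<in>{0, a}. G c + G (prd n c)) = (Z::nat)"
  using assms by simp

lemma Ztriple:
  assumes "a \<noteq> 0" "b \<noteq> 0" "a \<noteq> b" "G 0 + G (prd n 0) = z0" "G a + G (prd n a) = za"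
    "G b + G (prd n b) = zb" "z0 + za + zb = Z"
  shows "(\<Sum>c\<in>{0, a, b}. G c + G (prd n c)) = (Z::nat)"
  using assms by (simp add: add.assoc)

lemma sum_reidx: "(\<And>j. j < N \<Longrightarrow> a j = b j) \<Longrightarrow> (\<Sum>j<N. (H (a j)::nat)) = (\<Sum>j<N. H (b j))"
  by (rule sum.cong) auto

lemma upper_L0:
  assumes F: "fam n B C0 pt"
    and Z: "(\<Sum>c\<in>C0. gE {0..<n} (cLabel n) c + gE {0..<n} (cLabel n) (prd n c)) = Z"
    and d: "Z \<noteq> 2*(n+2)" "Z \<noteq> 2*(n+1)"
  shows "local_antimagic n B {0..<n} (cLabel n) \<and> card (vsum n B {0..<n} (cLabel n) ` qmap n B ` {0..<n}) \<le> 3"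
  by (rule upper[OF F _ H0_ev H0_od Z d _ L0_bij]) auto

lemma upper_L1:
  assumes F: "fam n B C0 pt"
    and Z: "(\<Sum>c\<in>C0. gE ({0..<n}-{0}) (\<lambda>j. cLabel n j - 1) c + gE ({0..<n}-{0}) (\<lambda>j. cLabel n j - 1) (prd n c)) = Z"
    and d: "Z \<noteq> 2*n" "Z \<noteq> 2*(n-1)"
  shows "local_antimagic n B ({0..<n}-{0}) (\<lambda>j. cLabel n j - 1) \<and> card (vsum n B ({0..<n}-{0}) (\<lambda>j. cLabel n j - 1) ` qmap n B ` {0..<n}) \<le> 3"
proof -
  have n: "2 \<le> n" using famD(1)[OF F] .
  show ?thesis by (rule upper[OF F _ H1_ev H1_od Z d _ L1_bij]) (use n in auto)
qed

lemma upper_L2: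
  assumes F: "fam n B C0 pt" and n: "3 \<le> n"
    and Z: "(\<Sum>c\<in>C0. gE ({0..<n}-{1}) (\<lambda>j. n - cLabel n j) c + gE ({0..<n}-{1}) (\<lambda>j. n - cLabel n j) (prd n c)) = Z"
    and d: "Z \<noteq> 2*(n-2)" "Z \<noteq> 2*(n-1)"
  shows "local_antimagic n B ({0..<n}-{1}) (\<lambda>j. n - cLabel n j) \<and> card (vsum n B ({0..<n}-{1}) (\<lambda>j. n - cLabel n j) ` qmap n B ` {0..<n}) \<le> 3"
  by (rule upper[OF F _ H2_ev H2_od Z d _ L2_bij]) (use n in auto)

lemma odd_H': "(\<Sum>m<N. g (2*m+1) + g (prd n (2*m+1))) = (\<Sum>j<2*N. (g j::nat))"
  by (simp add: prd_def sum_pairs add.commute)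

lemma assemble:
  assumes up0: "local_antimagic n B {0..<n} f0 \<and> card (vsum n B {0..<n} f0 ` qmap n B ` {0..<n}) \<le> 3"
    and up1: "local_antimagic n B ({0..<n}-{0}) f1 \<and> card (vsum n B ({0..<n}-{0}) f1 ` qmap n B ` {0..<n}) \<le> 3"
    and up2: "local_antimagic n B ({0..<n}-{1}) f2 \<and> card (vsum n B ({0..<n}-{1}) f2 ` qmap n B ` {0..<n}) \<le> 3"
    and low0: "\<And>f a b. local_antimagic n B {0..<n} f \<Longrightarrow>
        \<forall>i<n. vsum n B {0..<n} f (qmap n B i) \<in> {a, b} \<Longrightarrow> False"
    and low1: "\<And>f a b. local_antimagic n B ({0..<n}-{0}) f \<Longrightarrow>
        \<forall>i<n. vsum n B ({0..<n}-{0}) f (qmap n B i) \<in> {a, b} \<Longrightarrow> False"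
    and low2: "\<And>f a b. local_antimagic n B ({0..<n}-{1}) f \<Longrightarrow>
        \<forall>i<n. vsum n B ({0..<n}-{1}) f (qmap n B i) \<in> {a, b} \<Longrightarrow> False"
    and e: "e = 0 \<or> e = 1"
  shows "chi_la n B {0..<n} = 3 \<and> chi_la n B ({0..<n}-{e}) = 3"
proof -
  have c0: "chi_la n B {0..<n} = 3"
    by (rule chi3[OF up0[THEN conjunct1] up0[THEN conjunct2] low0])
  have c1: "chi_la n B ({0..<n}-{0}) = 3"
    by (rule chi3[OF up1[THEN conjunct1] up1[THEN conjunct2] low1])
  have c2: "chi_la n B ({0..<n}-{1}) = 3"
    by (rule chi3[OF up2[THEN conjunct1] up2[THEN conjunct2] low2])
  show ?thesis using c0 c1 c2 e by auto
qed

lemma e01: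
  assumes "e < n" "2 \<le> n" "cLabel n e \<in> {1, n}"
  shows "e = 0 \<or> e = 1"
proof (cases "even e")
  case True
  then obtain m where m: "e = 2*m" by (auto elim!: evenE)
  then have "m + 1 = 1 \<or> m + 1 = n" using assms True by (simp add: cLabel_def)
  then show ?thesis using m assms by auto
next
  case False
  then obtain m where m: "e = 2*m+1" by (auto elim!: oddE)
  then have "n - m = 1 \<or> n - m = n" using assms False by (simp add: cLabel_def)
  then show ?thesis using m assms by auto
qed

lemma low_mixed:
  assumes F: "fam n B C0 pt" and la: "local_antimagic n B E f"
    and E: "E \<subseteq> {..<n}" "\<And>j. 2 \<le> j \<Longrightarrow> j < n \<Longrightarrow> j \<in> E" and n4: "4 \<le> n"
    and z: "z \<in> C0" "2 \<le> z" "z < n" "even z \<longleftrightarrow> even (n - 1)"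
    and vals: "\<forall>i<n. vsum n B E f (qmap n B i) \<in> {a, b}"
  shows False
proof -
  define S where "S i = vsum n B E f (qmap n B i)" for i
  have v: "\<forall>i<n. S i \<in> {a, b}" using vals by (simp add: S_def)
  note C = core[OF la E(1) E(2) n4 S_def v]
  have R0: "Rf C0 pt 0 = C0" using famD(5)[OF F] by (simp add: Rf_def)
  have "qmap n B 0 = qmap n B z" using fam_qmap_eq[OF F _ z(3)] R0 z(1) n4 by auto
  then have "S 0 = S z" by (simp add: S_def)
  also have "S z = (if even z then S 2 else S 3)" using C(1) z(2) z(3) by blast
  also have "\<dots> = (if even (n - 1) then S 2 else S 3)" using z(4) by simp
  also have "\<dots> = S (n - 1)"
  proof -
    have n1: "2 \<le> n - 1" "n - 1 < n" using n4 by auto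
    have "S (n - 1) = (if even (n - 1) then S 2 else S 3)" using C(1) n1 by blast
    then show ?thesis by simp
  qed
  finally show False using C(3) by simp
qed

lemma low_edge0:
  assumes F: "fam n B C0 pt" and la: "local_antimagic n B E f"
    and E: "E \<subseteq> {..<n}" "\<And>j. 2 \<le> j \<Longrightarrow> j < n \<Longrightarrow> j \<in> E" and n4: "4 \<le> n"
    and w: "w \<in> Rf C0 pt 1" "2 \<le> w" "w < n" "odd w" and ne: "even (n - 1)" and E0: "0 \<in> E"
    and vals: "\<forall>i<n. vsum n B E f (qmap n B i) \<in> {a, b}"
  shows False
proof -
  define S where "S i = vsum n B E f (qmap n B i)" for i
  have v: "\<forall>i<n. S i \<in> {a, b}" using vals by (simp add: S_def)
  note C = core[OF la E(1) E(2) n4 S_def v]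
  have "qmap n B 1 = qmap n B w" using fam_qmap_eq[OF F _ w(3) w(1)] n4 by auto
  then have "S 1 = S w" by (simp add: S_def)
  also have "S w = S 3"
  proof -
    have "S w = (if even w then S 2 else S 3)" using C(1) w(2) w(3) by blast
    then show ?thesis using w(4) by simp
  qed
  finally have S1: "S 1 = S 3" .
  have n1: "2 \<le> n - 1" "n - 1 < n" using n4 by auto
  have "S (n - 1) = (if even (n - 1) then S 2 else S 3)" using C(1) n1 by blast
  then have "S (n - 1) = S 2" using ne by simp
  then have "S 0 = S 3" using C(3) C(4) by auto
  moreover have "S 0 \<noteq> S 1" using C(6) E0 by blast
  ultimately show False using S1 by simp
qed

definition pt1 :: "nat \<Rightarrow> nat \<Rightarrow> nat" where
  "pt1 k x = (if even x then (if x \<le> 4*k then x+4*k+2 else x-(4*k+2))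
     else if x \<le> 2*k+1 then x+2*k+2 else if x \<le> 4*k+3 then x-(2*k+2)
     else if x \<le> 6*k+3 then x+2*k else x-2*k)"

definition C01 :: "nat \<Rightarrow> nat set" where "C01 k = {0, 4*k+2}"

lemma blocks1: "blocks k 1 = (\<lambda>i. {2*i, 4*k+2*i+2}) ` {0..2*k} \<union> (\<lambda>j. {2*j+1, 2*k+2*j+3}) ` {0..k}
      \<union> (\<lambda>j. {4*k+2*j+5, 6*k+2*j+5}) ` {0..<k}"
  by (simp add: blocks_def)

lemma r1a: "i \<in> {0..2*k} \<Longrightarrow> Rf (C01 k) (pt1 k) (2*i) = {2*i, 4*k+2*i+2}"
  by (auto simp: Rf_def pt1_def C01_def; presburger)
lemma r1b: "i \<in> {0..2*k} \<Longrightarrow> Rf (C01 k) (pt1 k) (4*k+2*i+2) = {2*i, 4*k+2*i+2}"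
  by (auto simp: Rf_def pt1_def C01_def; presburger)
lemma r1c: "j \<in> {0..k} \<Longrightarrow> Rf (C01 k) (pt1 k) (2*j+1) = {2*j+1, 2*k+2*j+3}"
  by (auto simp: Rf_def pt1_def C01_def; presburger)
lemma r1d: "j \<in> {0..k} \<Longrightarrow> Rf (C01 k) (pt1 k) (2*k+2*j+3) = {2*j+1, 2*k+2*j+3}"
  by (auto simp: Rf_def pt1_def C01_def; presburger)
lemma r1e: "j \<in> {0..<k} \<Longrightarrow> Rf (C01 k) (pt1 k) (4*k+2*j+5) = {4*k+2*j+5, 6*k+2*j+5}"
  by (auto simp: Rf_def pt1_def C01_def; presburger)
lemma r1f: "j \<in> {0..<k} \<Longrightarrow> Rf (C01 k) (pt1 k) (6*k+2*j+5) = {4*k+2*j+5, 6*k+2*j+5}"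
  by (auto simp: Rf_def pt1_def C01_def; presburger)

lemma st1: "x < 8*k+4 \<Longrightarrow> x \<notin> C01 k \<Longrightarrow>
   pt1 k x \<noteq> x \<and> pt1 k x \<noteq> 0 \<and> pt1 k x < 8*k+4 \<and> (even (pt1 k x) \<longleftrightarrow> even x)"
  unfolding pt1_def C01_def by auto presburger+

lemma fam1: "1 \<le> k \<Longrightarrow> fam (8*k+4) (blocks k 1) (C01 k) (pt1 k)"
  unfolding fam_def
proof (intro conjI)
  assume k: "1 \<le> k"
  show "2 \<le> 8*k+4" by simp
  show "\<forall>b\<in>blocks k 1. \<forall>x\<in>b. Rf (C01 k) (pt1 k) x = b"
  proof -
    have A1: "\<forall>b\<in>(\<lambda>i. {2*i, 4*k+2*i+2}) ` {0..2*k}. \<forall>x\<in>b. Rf (C01 k) (pt1 k) x = b"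
      by (rule img_ok) (erule r1a, erule r1b)
    have A2: "\<forall>b\<in>(\<lambda>j. {2*j+1, 2*k+2*j+3}) ` {0..k}. \<forall>x\<in>b. Rf (C01 k) (pt1 k) x = b"
      by (rule img_ok) (erule r1c, erule r1d)
    have A3: "\<forall>b\<in>(\<lambda>j. {4*k+2*j+5, 6*k+2*j+5}) ` {0..<k}. \<forall>x\<in>b. Rf (C01 k) (pt1 k) x = b"
      by (rule img_ok) (erule r1e, erule r1f)
    show ?thesis unfolding blocks1 ball_Un using A1 A2 A3 by blast
  qed
  show "\<forall>x<8*k+4. x \<notin> C01 k \<longrightarrow> (\<exists>b\<in>blocks k 1. x \<in> b)"
  proof (intro allI impI)
    fix x assume x: "x < 8*k+4"
    define I1 where "I1 = (\<lambda>i. {2*i, 4*k+2*i+2}) ` {0..2*k}"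
    define I2 where "I2 = (\<lambda>j. {2*j+1, 2*k+2*j+3}) ` {0..k}"
    define I3 where "I3 = (\<lambda>j. {4*k+2*j+5, 6*k+2*j+5}) ` {0..<k}"
    have "(\<exists>b\<in>I1. x \<in> b) \<or> (\<exists>b\<in>I2. x \<in> b) \<or> (\<exists>b\<in>I3. x \<in> b)"
    proof (cases "even x")
      case True
      then obtain i where i: "x = 2*i" by (auto elim!: evenE)
      show ?thesis
      proof (cases "i \<le> 2*k")
        case True then show ?thesis unfolding I1_def by (intro disjI1 cov_f[where i=i]) (use i in auto)
      next
        case False then show ?thesis unfolding I1_def using x i
          by (intro disjI1 cov_g[where i="i - (2*k+1)"]) auto
      qed
    next
      case False
      then obtain i where i: "x = 2*i+1" by (auto elim!: oddE)
      consider "i \<le> k" | "k < i \<and> i \<le> 2*k+1" | "2*k+1 < i \<and> i \<le> 3*k+1" | "3*k+1 < i" by linarith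
      then show ?thesis
      proof cases
        case 1 then show ?thesis unfolding I2_def using i by (intro disjI2 disjI1 cov_f[where i=i]) auto
      next
        case 2 then show ?thesis unfolding I2_def using i by (intro disjI2 disjI1 cov_g[where i="i-(k+1)"]) auto
      next
        case 3 then show ?thesis unfolding I3_def using i by (intro disjI2 disjI2 cov_f[where i="i-(2*k+2)"]) auto
      next
        case 4 then show ?thesis unfolding I3_def using i x by (intro disjI2 disjI2 cov_g[where i="i-(3*k+2)"]) auto
      qed
    qed
    then show "\<exists>b\<in>blocks k 1. x \<in> b" unfolding blocks1 I1_def[symmetric] I2_def[symmetric] I3_def[symmetric]
      by blast
  qed
  show "C01 k \<in> blocks k 1 \<or> C01 k = {0}"
    unfolding blocks1 C01_def by force
  show "0 \<in> C01 k" "C01 k \<subseteq> {..<8*k+4}" by (auto simp: C01_def)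
  show "\<forall>c\<in>C01 k. prd (8*k+4) c \<notin> C01 k" by (auto simp: C01_def prd_def)
  show "\<forall>x<8*k+4. x \<notin> C01 k \<longrightarrow> pt1 k x \<noteq> x \<and> pt1 k x \<noteq> 0 \<and> pt1 k x < 8*k+4 \<and> (even (pt1 k x) \<longleftrightarrow> even x)"
    using st1 by blast
qed

lemma up1:
  assumes k: "1 \<le> k"
  shows "local_antimagic (8*k+4) (blocks k 1) {0..<8*k+4} (cLabel (8*k+4)) \<and> card (vsum (8*k+4) (blocks k 1) {0..<8*k+4} (cLabel (8*k+4)) ` qmap (8*k+4) (blocks k 1) ` {0..<8*k+4}) \<le> 3"
    "local_antimagic (8*k+4) (blocks k 1) ({0..<8*k+4}-{0}) (\<lambda>j. cLabel (8*k+4) j - 1) \<and> card (vsum (8*k+4) (blocks k 1) ({0..<8*k+4}-{0}) (\<lambda>j. cLabel (8*k+4) j - 1) ` qmap (8*k+4) (blocks k 1) ` {0..<8*k+4}) \<le> 3"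
    "local_antimagic (8*k+4) (blocks k 1) ({0..<8*k+4}-{1}) (\<lambda>j. (8*k+4) - cLabel (8*k+4) j) \<and> card (vsum (8*k+4) (blocks k 1) ({0..<8*k+4}-{1}) (\<lambda>j. (8*k+4) - cLabel (8*k+4) j) ` qmap (8*k+4) (blocks k 1) ` {0..<8*k+4}) \<le> 3"
proof -
  note F = fam1[OF k]
  have cl: "cLabel (8*k+4) (8*k+4 - 1) = 4*k+3" using cLabel_last_even[of "8*k+4"] by simp
  have ne: "(0::nat) \<noteq> 4*k+2" by simp
  show "local_antimagic (8*k+4) (blocks k 1) {0..<8*k+4} (cLabel (8*k+4)) \<and> card (vsum (8*k+4) (blocks k 1) {0..<8*k+4} (cLabel (8*k+4)) ` qmap (8*k+4) (blocks k 1) ` {0..<8*k+4}) \<le> 3"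
  proof (rule upper_L0[OF F])
    show "(\<Sum>c\<in>C01 k. gE {0..<8*k+4} (cLabel (8*k+4)) c + gE {0..<8*k+4} (cLabel (8*k+4)) (prd (8*k+4) c)) = 12*k+10"
      unfolding C01_def
    proof (rule Zpair)
      show "gE {0..<8*k+4} (cLabel (8*k+4)) 0 + gE {0..<8*k+4} (cLabel (8*k+4)) (prd (8*k+4) 0) = 4*k+4"
        using Z0_L0[of "8*k+4"] cl by simp
      show "gE {0..<8*k+4} (cLabel (8*k+4)) (4*k+2) + gE {0..<8*k+4} (cLabel (8*k+4)) (prd (8*k+4) (4*k+2)) = (8*k+4)+2"
        by (rule H0_ev) auto
    qed (use k in simp_all)
  qed (use k in simp_all)
  show "local_antimagic (8*k+4) (blocks k 1) ({0..<8*k+4}-{0}) (\<lambda>j. cLabel (8*k+4) j - 1) \<and> card (vsum (8*k+4) (blocks k 1) ({0..<8*k+4}-{0}) (\<lambda>j. cLabel (8*k+4) j - 1) ` qmap (8*k+4) (blocks k 1) ` {0..<8*k+4}) \<le> 3"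
  proof (rule upper_L1[OF F])
    show "(\<Sum>c\<in>C01 k. gE ({0..<8*k+4}-{0}) (\<lambda>j. cLabel (8*k+4) j - 1) c + gE ({0..<8*k+4}-{0}) (\<lambda>j. cLabel (8*k+4) j - 1) (prd (8*k+4) c)) = 12*k+6"
      unfolding C01_def
    proof (rule Zpair)
      show "gE ({0..<8*k+4}-{0}) (\<lambda>j. cLabel (8*k+4) j - 1) 0 + gE ({0..<8*k+4}-{0}) (\<lambda>j. cLabel (8*k+4) j - 1) (prd (8*k+4) 0) = 4*k+2"
        using Z0_L1[of "8*k+4"] cl by simp
      show "gE ({0..<8*k+4}-{0}) (\<lambda>j. cLabel (8*k+4) j - 1) (4*k+2) + gE ({0..<8*k+4}-{0}) (\<lambda>j. cLabel (8*k+4) j - 1) (prd (8*k+4) (4*k+2)) = 8*k+4"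
        by (rule H1_ev) auto
    qed (use k in simp_all)
  qed (use k in simp_all)
  show "local_antimagic (8*k+4) (blocks k 1) ({0..<8*k+4}-{1}) (\<lambda>j. (8*k+4) - cLabel (8*k+4) j) \<and> card (vsum (8*k+4) (blocks k 1) ({0..<8*k+4}-{1}) (\<lambda>j. (8*k+4) - cLabel (8*k+4) j) ` qmap (8*k+4) (blocks k 1) ` {0..<8*k+4}) \<le> 3"
  proof (rule upper_L2[OF F])
    show "(\<Sum>c\<in>C01 k. gE ({0..<8*k+4}-{1}) (\<lambda>j. (8*k+4) - cLabel (8*k+4) j) c + gE ({0..<8*k+4}-{1}) (\<lambda>j. (8*k+4) - cLabel (8*k+4) j) (prd (8*k+4) c)) = 20*k+6"
      unfolding C01_def
    proof (rule Zpair)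
      show "gE ({0..<8*k+4}-{1}) (\<lambda>j. (8*k+4) - cLabel (8*k+4) j) 0 + gE ({0..<8*k+4}-{1}) (\<lambda>j. (8*k+4) - cLabel (8*k+4) j) (prd (8*k+4) 0) = 12*k+4"
        using Z0_L2[of "8*k+4"] cl by simp
      show "gE ({0..<8*k+4}-{1}) (\<lambda>j. (8*k+4) - cLabel (8*k+4) j) (4*k+2) + gE ({0..<8*k+4}-{1}) (\<lambda>j. (8*k+4) - cLabel (8*k+4) j) (prd (8*k+4) (4*k+2)) = (8*k+4) - 2"
        by (rule H2_ev) auto
    qed (use k in simp_all)
  qed (use k in simp_all)
qed

lemma low1:
  assumes k: "1 \<le> k" and la: "local_antimagic (8*k+4) (blocks k 1) E f"
    and E: "E \<subseteq> {..<8*k+4}" "\<And>j. 2 \<le> j \<Longrightarrow> j < 8*k+4 \<Longrightarrow> j \<in> E" "0 \<in> E \<or> 1 \<in> E"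
    and vals: "\<forall>i<8*k+4. vsum (8*k+4) (blocks k 1) E f (qmap (8*k+4) (blocks k 1) i) \<in> {a, b}"
  shows False
proof -
  define S where "S i = vsum (8*k+4) (blocks k 1) E f (qmap (8*k+4) (blocks k 1) i)" for i
  define H where "H c = gE E f c + gE E f (prd (8*k+4) c)" for c
  note F = fam1[OF k]
  have n4: "4 \<le> 8*k+4" by simp
  have v: "\<forall>i<8*k+4. S i \<in> {a, b}" using vals by (simp add: S_def)
  note C = core[OF la E(1) E(2) n4 S_def v]
  have alt: "\<And>i. 2 \<le> i \<Longrightarrow> i < 8*k+4 \<Longrightarrow> S i = (if even i then S 2 else S 3)"
    using C(1) by blast
  have d23: "S 2 \<noteq> S 3" using C(2) .
  have s0: "S 0 \<noteq> S (8*k+4-1)" "S 0 \<in> {S 2, S 3}" "S 1 \<in> {S 2, S 3}"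
    using C(3,4,5) by blast+
  have s01: "0 \<in> E \<Longrightarrow> S 0 \<noteq> S 1" "1 \<in> E \<Longrightarrow> S 1 \<noteq> S 2"
    using C(6,7) by blast+
  have "S (8*k+4-1) = S 3" using alt[of "8*k+4-1"] by simp
  then have S0: "S 0 = S 2" using s0 by auto
  have S1: "S 1 = S 3" using s01 S0 s0(3) E(3) by auto
  have Sall: "S i = (if even i then S 2 else S 3)" if "i < 8*k+4" for i
  proof -
    consider "i = 0" | "i = 1" | "2 \<le> i" by linarith
    then show ?thesis
    proof cases
      case 1 then show ?thesis using S0 by simp
    next
      case 2 then show ?thesis using S1 by simp
    next
      case 3 show ?thesis by (rule alt[OF 3 that])
    qed
  qed
  have pE: "S (2*m) = H (2*m) + H (4*k+2*m+2)" if "m < 2*k+1" for m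
    unfolding S_def H_def by (rule fam_vsum2[OF F _ E(1) r1a]) (use that in auto)
  have pO1: "S (2*j+1) = H (2*j+1) + H (2*k+2*j+3)" if "j < k+1" for j
    unfolding S_def H_def by (rule fam_vsum2[OF F _ E(1) r1c]) (use that in auto)
  have pO2: "S (4*k+2*j+5) = H (4*k+2*j+5) + H (6*k+2*j+5)" if "j < k" for j
    unfolding S_def H_def by (rule fam_vsum2[OF F _ E(1) r1e]) (use that in auto)
  have SE: "S (2*m) = S 2" if "2*m < 8*k+4" for m using Sall[of "2*m"] that by simp
  have SO: "S (2*m+1) = S 3" if "2*m+1 < 8*k+4" for m using Sall[of "2*m+1"] that by simp
  have SO2: "S (4*k+2*m+5) = S 3" if "m < k" for m
  proof -
    have e: "4*k+2*m+5 = 2*(2*k+m+2)+1" by simp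
    show ?thesis unfolding e by (rule SO) (use that in simp)
  qed
  define G where "G = (\<Sum>j<8*k+4. gE E f j)"
  have "(2*k+1) * S 2 = (\<Sum>m<2*k+1. S (2*m))"
    using SE by simp
  also have "\<dots> = (\<Sum>m<2*k+1. H (2*m) + H (4*k+2*m+2))"
    using pE by simp
  also have "\<dots> = (\<Sum>m<2*k+1. H (2*m)) + (\<Sum>m<2*k+1. H (2*((2*k+1)+m)))"
    by (simp add: sum.distrib algebra_simps)
  also have "\<dots> = (\<Sum>m<(2*k+1)+(2*k+1). H (2*m))"
    by (rule sum_split[symmetric])
  also have "\<dots> = (\<Sum>m<4*k+2. gE E f (2*m) + gE E f (prd (8*k+4) (2*m)))"
    by (simp add: H_def)
  also have "\<dots> = G" unfolding G_def by (rule even_H) auto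
  finally have e1: "(2*k+1) * S 2 = G" .
  define Od where "Od m = H (2*m+1)" for m
  have "(2*k+1) * S 3 = (\<Sum>j<k+1. S (2*j+1)) + (\<Sum>j<k. S (4*k+2*j+5))"
    using SO SO2 by simp
  also have "\<dots> = (\<Sum>j<k+1. H (2*j+1) + H (2*k+2*j+3)) + (\<Sum>j<k. H (4*k+2*j+5) + H (6*k+2*j+5))"
    using pO1 pO2 by simp
  also have "\<dots> = ((\<Sum>j<k+1. Od j) + (\<Sum>j<k+1. Od ((k+1)+j))) + ((\<Sum>j<k. Od ((2*k+2)+j)) + (\<Sum>j<k. Od ((2*k+2)+(k+j))))"
  proof -
    have o0: "(\<Sum>j<k+1. H (2*j+1)) = (\<Sum>j<k+1. Od j)" by (simp add: Od_def)
    have o1: "(\<Sum>j<k+1. H (2*k+2*j+3)) = (\<Sum>j<k+1. Od ((k+1)+j))"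
      unfolding Od_def by (rule sum_reidx) simp
    have o2: "(\<Sum>j<k. H (4*k+2*j+5)) = (\<Sum>j<k. Od ((2*k+2)+j))"
      unfolding Od_def by (rule sum_reidx) simp
    have o3: "(\<Sum>j<k. H (6*k+2*j+5)) = (\<Sum>j<k. Od ((2*k+2)+(k+j)))"
      unfolding Od_def by (rule sum_reidx) simp
    show ?thesis unfolding sum.distrib o0 o1 o2 o3 ..
  qed
  also have "\<dots> = (\<Sum>j<(k+1)+(k+1). Od j) + (\<Sum>j<k+k. Od ((2*k+2)+j))"
    by (simp only: sum_split)
  also have "\<dots> = (\<Sum>j<2*k+2. Od j) + (\<Sum>j<2*k. Od ((2*k+2)+j))"
  proof -
    have e: "(k+1)+(k+1) = 2*k+2" "k+k = 2*k" by simp_all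
    show ?thesis unfolding e ..
  qed
  also have "\<dots> = (\<Sum>j<(2*k+2)+2*k. Od j)"
    by (rule sum_split[symmetric])
  also have "\<dots> = (\<Sum>m<4*k+2. gE E f (2*m+1) + gE E f (prd (8*k+4) (2*m+1)))"
    by (simp add: Od_def H_def)
  also have "\<dots> = G" unfolding G_def by (rule odd_H) auto
  finally have e2: "(2*k+1) * S 3 = G" .
  from e1 e2 have eq: "(2*k+1) * S 2 = (2*k+1) * S 3" by (simp only:)
  have pos: "0 < 2*k+1" by simp
  have "S 2 = S 3" using nat_mult_eq_cancel1[OF pos] eq by blast
  then show False using d23 by simp
qed

lemma thm1:
  assumes k: "1 \<le> k" and e: "e = 0 \<or> e = 1"
  shows "chi_la (8*k+4) (blocks k 1) {0..<8*k+4} = 3 \<and> chi_la (8*k+4) (blocks k 1) ({0..<8*k+4}-{e}) = 3"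
proof (rule assemble[OF up1[OF k] _ _ _ e])
  fix f a b
  show "local_antimagic (8*k+4) (blocks k 1) {0..<8*k+4} f \<Longrightarrow> \<forall>i<8*k+4. vsum (8*k+4) (blocks k 1) {0..<8*k+4} f (qmap (8*k+4) (blocks k 1) i) \<in> {a, b} \<Longrightarrow> False"
    by (erule low1[OF k _ _ _ _]) auto
  show "local_antimagic (8*k+4) (blocks k 1) ({0..<8*k+4}-{0}) f \<Longrightarrow> \<forall>i<8*k+4. vsum (8*k+4) (blocks k 1) ({0..<8*k+4}-{0}) f (qmap (8*k+4) (blocks k 1) i) \<in> {a, b} \<Longrightarrow> False"
    by (erule low1[OF k _ _ _ _]) auto
  show "local_antimagic (8*k+4) (blocks k 1) ({0..<8*k+4}-{1}) f \<Longrightarrow> \<forall>i<8*k+4. vsum (8*k+4) (blocks k 1) ({0..<8*k+4}-{1}) f (qmap (8*k+4) (blocks k 1) i) \<in> {a, b} \<Longrightarrow> False"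
    by (erule low1[OF k _ _ _ _]) auto
qed

definition pt2 :: "nat \<Rightarrow> nat \<Rightarrow> nat" where
  "pt2 k x = (if even x then (if x \<le> 4*k then x+4*k else x-4*k)
     else if x < 4*k then x+4*k+2 else x-(4*k+2))"

definition C02 :: "nat \<Rightarrow> nat set" where "C02 k = {0, 4*k+1}"

lemma blocks2: "blocks k 2 = (\<lambda>i. {2*i, 4*k+2*i}) ` {1..2*k} \<union> (\<lambda>j. {2*j+1, 4*k+2*j+3}) ` {0..<2*k}
      \<union> {C02 k}"
  by (simp add: blocks_def C02_def)

lemma r2a: "i \<in> {1..2*k} \<Longrightarrow> Rf (C02 k) (pt2 k) (2*i) = {2*i, 4*k+2*i}"
  by (auto simp: Rf_def pt2_def C02_def; presburger)
lemma r2b: "i \<in> {1..2*k} \<Longrightarrow> Rf (C02 k) (pt2 k) (4*k+2*i) = {2*i, 4*k+2*i}"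
  by (auto simp: Rf_def pt2_def C02_def; presburger)
lemma r2c: "j \<in> {0..<2*k} \<Longrightarrow> Rf (C02 k) (pt2 k) (2*j+1) = {2*j+1, 4*k+2*j+3}"
  by (auto simp: Rf_def pt2_def C02_def; presburger)
lemma r2d: "j \<in> {0..<2*k} \<Longrightarrow> Rf (C02 k) (pt2 k) (4*k+2*j+3) = {2*j+1, 4*k+2*j+3}"
  by (auto simp: Rf_def pt2_def C02_def; presburger)

lemma st2: "x < 8*k+2 \<Longrightarrow> x \<notin> C02 k \<Longrightarrow>
   pt2 k x \<noteq> x \<and> pt2 k x \<noteq> 0 \<and> pt2 k x < 8*k+2 \<and> (even (pt2 k x) \<longleftrightarrow> even x)"
  unfolding pt2_def C02_def by auto presburger+

lemma fam2: "1 \<le> k \<Longrightarrow> fam (8*k+2) (blocks k 2) (C02 k) (pt2 k)"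
  unfolding fam_def
proof (intro conjI)
  assume k: "1 \<le> k"
  show "2 \<le> 8*k+2" by simp
  show "\<forall>b\<in>blocks k 2. \<forall>x\<in>b. Rf (C02 k) (pt2 k) x = b"
  proof -
    have A1: "\<forall>b\<in>(\<lambda>i. {2*i, 4*k+2*i}) ` {1..2*k}. \<forall>x\<in>b. Rf (C02 k) (pt2 k) x = b"
      by (rule img_ok) (erule r2a, erule r2b)
    have A2: "\<forall>b\<in>(\<lambda>j. {2*j+1, 4*k+2*j+3}) ` {0..<2*k}. \<forall>x\<in>b. Rf (C02 k) (pt2 k) x = b"
      by (rule img_ok) (erule r2c, erule r2d)
    have A3: "\<forall>b\<in>{C02 k}. \<forall>x\<in>b. Rf (C02 k) (pt2 k) x = b"
      by (simp add: Rf_def)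
    show ?thesis unfolding blocks2 ball_Un using A1 A2 A3 by blast
  qed
  show "\<forall>x<8*k+2. x \<notin> C02 k \<longrightarrow> (\<exists>b\<in>blocks k 2. x \<in> b)"
  proof (intro allI impI)
    fix x assume x: "x < 8*k+2" and xc: "x \<notin> C02 k"
    define I1 where "I1 = (\<lambda>i. {2*i, 4*k+2*i}) ` {1..2*k}"
    define I2 where "I2 = (\<lambda>j. {2*j+1, 4*k+2*j+3}) ` {0..<2*k}"
    have "(\<exists>b\<in>I1. x \<in> b) \<or> (\<exists>b\<in>I2. x \<in> b)"
    proof (cases "even x")
      case True
      then obtain i where i: "x = 2*i" by (auto elim!: evenE)
      have i1: "1 \<le> i" using i xc by (auto simp: C02_def)
      show ?thesis
      proof (cases "i \<le> 2*k")
        case True then show ?thesis unfolding I1_def using i i1 by (intro disjI1 cov_f[where i=i]) auto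
      next
        case False then show ?thesis unfolding I1_def using x i
          by (intro disjI1 cov_g[where i="i - 2*k"]) auto
      qed
    next
      case False
      then obtain i where i: "x = 2*i+1" by (auto elim!: oddE)
      have i2: "i \<noteq> 2*k" using i xc by (auto simp: C02_def)
      consider "i < 2*k" | "2*k < i" using i2 by linarith
      then show ?thesis
      proof cases
        case 1 then show ?thesis unfolding I2_def using i by (intro disjI2 cov_f[where i=i]) auto
      next
        case 2 then show ?thesis unfolding I2_def using i x by (intro disjI2 cov_g[where i="i-(2*k+1)"]) auto
      qed
    qed
    then show "\<exists>b\<in>blocks k 2. x \<in> b" unfolding blocks2 I1_def[symmetric] I2_def[symmetric]
      by blast
  qed
  show "C02 k \<in> blocks k 2 \<or> C02 k = {0}"
    unfolding blocks2 by blast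
  show "0 \<in> C02 k" "C02 k \<subseteq> {..<8*k+2}" by (auto simp: C02_def)
  show "\<forall>c\<in>C02 k. prd (8*k+2) c \<notin> C02 k" using k by (auto simp: C02_def prd_def)
  show "\<forall>x<8*k+2. x \<notin> C02 k \<longrightarrow> pt2 k x \<noteq> x \<and> pt2 k x \<noteq> 0 \<and> pt2 k x < 8*k+2 \<and> (even (pt2 k x) \<longleftrightarrow> even x)"
    using st2 by blast
qed

lemma up2:
  assumes k: "1 \<le> k"
  shows "local_antimagic (8*k+2) (blocks k 2) {0..<8*k+2} (cLabel (8*k+2)) \<and> card (vsum (8*k+2) (blocks k 2) {0..<8*k+2} (cLabel (8*k+2)) ` qmap (8*k+2) (blocks k 2) ` {0..<8*k+2}) \<le> 3"
    "local_antimagic (8*k+2) (blocks k 2) ({0..<8*k+2}-{0}) (\<lambda>j. cLabel (8*k+2) j - 1) \<and> card (vsum (8*k+2) (blocks k 2) ({0..<8*k+2}-{0}) (\<lambda>j. cLabel (8*k+2) j - 1) ` qmap (8*k+2) (blocks k 2) ` {0..<8*k+2}) \<le> 3"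
    "local_antimagic (8*k+2) (blocks k 2) ({0..<8*k+2}-{1}) (\<lambda>j. (8*k+2) - cLabel (8*k+2) j) \<and> card (vsum (8*k+2) (blocks k 2) ({0..<8*k+2}-{1}) (\<lambda>j. (8*k+2) - cLabel (8*k+2) j) ` qmap (8*k+2) (blocks k 2) ` {0..<8*k+2}) \<le> 3"
proof -
  note F = fam2[OF k]
  have cl: "cLabel (8*k+2) (8*k+2 - 1) = 4*k+2" using cLabel_last_even[of "8*k+2"] by simp
  show "local_antimagic (8*k+2) (blocks k 2) {0..<8*k+2} (cLabel (8*k+2)) \<and> card (vsum (8*k+2) (blocks k 2) {0..<8*k+2} (cLabel (8*k+2)) ` qmap (8*k+2) (blocks k 2) ` {0..<8*k+2}) \<le> 3"
  proof (rule upper_L0[OF F _ _ _])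
    show "(\<Sum>c\<in>C02 k. gE {0..<8*k+2} (cLabel (8*k+2)) c + gE {0..<8*k+2} (cLabel (8*k+2)) (prd (8*k+2) c)) = 12*k+6"
      unfolding C02_def
    proof (rule Zpair)
      show "gE {0..<8*k+2} (cLabel (8*k+2)) (0) + gE {0..<8*k+2} (cLabel (8*k+2)) (prd (8*k+2) (0)) = 4*k+3"
        using Z0_L0[of "8*k+2"] cl k by simp
      show "gE {0..<8*k+2} (cLabel (8*k+2)) (4*k+1) + gE {0..<8*k+2} (cLabel (8*k+2)) (prd (8*k+2) (4*k+1)) = (8*k+2)+1"
        by (rule H0_od) (use k in auto)
    qed (use k in simp_all)
  qed (use k in simp_all)
  show "local_antimagic (8*k+2) (blocks k 2) ({0..<8*k+2}-{0}) (\<lambda>j. cLabel (8*k+2) j - 1) \<and> card (vsum (8*k+2) (blocks k 2) ({0..<8*k+2}-{0}) (\<lambda>j. cLabel (8*k+2) j - 1) ` qmap (8*k+2) (blocks k 2) ` {0..<8*k+2}) \<le> 3"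
  proof (rule upper_L1[OF F _ _ _])
    show "(\<Sum>c\<in>C02 k. gE ({0..<8*k+2}-{0}) (\<lambda>j. cLabel (8*k+2) j - 1) c + gE ({0..<8*k+2}-{0}) (\<lambda>j. cLabel (8*k+2) j - 1) (prd (8*k+2) c)) = 12*k+2"
      unfolding C02_def
    proof (rule Zpair)
      show "gE ({0..<8*k+2}-{0}) (\<lambda>j. cLabel (8*k+2) j - 1) (0) + gE ({0..<8*k+2}-{0}) (\<lambda>j. cLabel (8*k+2) j - 1) (prd (8*k+2) (0)) = 4*k+1"
        using Z0_L1[of "8*k+2"] cl k by simp
      show "gE ({0..<8*k+2}-{0}) (\<lambda>j. cLabel (8*k+2) j - 1) (4*k+1) + gE ({0..<8*k+2}-{0}) (\<lambda>j. cLabel (8*k+2) j - 1) (prd (8*k+2) (4*k+1)) = (8*k+2) - 1"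
        by (rule H1_od) (use k in auto)
    qed (use k in simp_all)
  qed (use k in simp_all)
  show "local_antimagic (8*k+2) (blocks k 2) ({0..<8*k+2}-{1}) (\<lambda>j. (8*k+2) - cLabel (8*k+2) j) \<and> card (vsum (8*k+2) (blocks k 2) ({0..<8*k+2}-{1}) (\<lambda>j. (8*k+2) - cLabel (8*k+2) j) ` qmap (8*k+2) (blocks k 2) ` {0..<8*k+2}) \<le> 3"
  proof (rule upper_L2[OF F _ _ _ _])
    show "3 \<le> 8*k+2" using k by simp
    show "(\<Sum>c\<in>C02 k. gE ({0..<8*k+2}-{1}) (\<lambda>j. (8*k+2) - cLabel (8*k+2) j) c + gE ({0..<8*k+2}-{1}) (\<lambda>j. (8*k+2) - cLabel (8*k+2) j) (prd (8*k+2) c)) = 20*k+2"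
      unfolding C02_def
    proof (rule Zpair)
      show "gE ({0..<8*k+2}-{1}) (\<lambda>j. (8*k+2) - cLabel (8*k+2) j) (0) + gE ({0..<8*k+2}-{1}) (\<lambda>j. (8*k+2) - cLabel (8*k+2) j) (prd (8*k+2) (0)) = 12*k+1"
        using Z0_L2[of "8*k+2"] cl k by simp
      show "gE ({0..<8*k+2}-{1}) (\<lambda>j. (8*k+2) - cLabel (8*k+2) j) (4*k+1) + gE ({0..<8*k+2}-{1}) (\<lambda>j. (8*k+2) - cLabel (8*k+2) j) (prd (8*k+2) (4*k+1)) = (8*k+2) - 1"
        by (rule H2_od) (use k in auto)
    qed (use k in simp_all)
  qed (use k in simp_all)
qed

lemma thm2:
  assumes k: "1 \<le> k" and e: "e = 0 \<or> e = 1"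
  shows "chi_la (8*k+2) (blocks k 2) {0..<8*k+2} = 3 \<and> chi_la (8*k+2) (blocks k 2) ({0..<8*k+2}-{e}) = 3"
proof (rule assemble[OF up2[OF k] _ _ _ e])
  fix f a b
  show "local_antimagic (8*k+2) (blocks k 2) {0..<8*k+2} f \<Longrightarrow> \<forall>i<8*k+2. vsum (8*k+2) (blocks k 2) {0..<8*k+2} f (qmap (8*k+2) (blocks k 2) i) \<in> {a, b} \<Longrightarrow> False"
    by (erule low_mixed[OF fam2[OF k], where z="4*k+1"]) (use k in \<open>auto simp: C02_def\<close>)
  show "local_antimagic (8*k+2) (blocks k 2) ({0..<8*k+2}-{0}) f \<Longrightarrow> \<forall>i<8*k+2. vsum (8*k+2) (blocks k 2) ({0..<8*k+2}-{0}) f (qmap (8*k+2) (blocks k 2) i) \<in> {a, b} \<Longrightarrow> False"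
    by (erule low_mixed[OF fam2[OF k], where z="4*k+1"]) (use k in \<open>auto simp: C02_def\<close>)
  show "local_antimagic (8*k+2) (blocks k 2) ({0..<8*k+2}-{1}) f \<Longrightarrow> \<forall>i<8*k+2. vsum (8*k+2) (blocks k 2) ({0..<8*k+2}-{1}) f (qmap (8*k+2) (blocks k 2) i) \<in> {a, b} \<Longrightarrow> False"
    by (erule low_mixed[OF fam2[OF k], where z="4*k+1"]) (use k in \<open>auto simp: C02_def\<close>)
qed

definition pt3 :: "nat \<Rightarrow> nat \<Rightarrow> nat" where
  "pt3 k x = (if even x then (if x \<le> 4*k+2 then x+4*k+2 else x-(4*k+2))
     else if x \<le> 2*k+1 then x+6*k+4 else if x \<le> 4*k+1 then x+2*k+2
     else if x \<le> 6*k+3 then x-(2*k+2) else x-(6*k+4))"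

definition C03 :: "nat \<Rightarrow> nat set" where "C03 k = {0, 4*k+3}"

lemma blocks3: "blocks k 3 = (\<lambda>i. {2*i, 4*k+2+2*i}) ` {1..2*k+1} \<union> (\<lambda>j. {2*j+1, 6*k+5+2*j}) ` {0..k}
      \<union> (\<lambda>j. {2*k+3+2*j, 4*k+5+2*j}) ` {0..<k} \<union> {C03 k}"
  by (simp add: blocks_def C03_def)

lemma r3a: "i \<in> {1..2*k+1} \<Longrightarrow> Rf (C03 k) (pt3 k) (2*i) = {2*i, 4*k+2+2*i}"
  by (auto simp: Rf_def pt3_def C03_def; presburger)
lemma r3b: "i \<in> {1..2*k+1} \<Longrightarrow> Rf (C03 k) (pt3 k) (4*k+2+2*i) = {2*i, 4*k+2+2*i}"
  by (auto simp: Rf_def pt3_def C03_def; presburger)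
lemma r3c: "j \<in> {0..k} \<Longrightarrow> Rf (C03 k) (pt3 k) (2*j+1) = {2*j+1, 6*k+5+2*j}"
  by (auto simp: Rf_def pt3_def C03_def; presburger)
lemma r3d: "j \<in> {0..k} \<Longrightarrow> Rf (C03 k) (pt3 k) (6*k+5+2*j) = {2*j+1, 6*k+5+2*j}"
  by (auto simp: Rf_def pt3_def C03_def; presburger)
lemma r3e: "j \<in> {0..<k} \<Longrightarrow> Rf (C03 k) (pt3 k) (2*k+3+2*j) = {2*k+3+2*j, 4*k+5+2*j}"
  by (auto simp: Rf_def pt3_def C03_def; presburger)
lemma r3f: "j \<in> {0..<k} \<Longrightarrow> Rf (C03 k) (pt3 k) (4*k+5+2*j) = {2*k+3+2*j, 4*k+5+2*j}"
  by (auto simp: Rf_def pt3_def C03_def; presburger)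

lemma st3: "x < 8*k+6 \<Longrightarrow> x \<notin> C03 k \<Longrightarrow>
   pt3 k x \<noteq> x \<and> pt3 k x \<noteq> 0 \<and> pt3 k x < 8*k+6 \<and> (even (pt3 k x) \<longleftrightarrow> even x)"
  unfolding pt3_def C03_def by auto presburger+

lemma fam3: "1 \<le> k \<Longrightarrow> fam (8*k+6) (blocks k 3) (C03 k) (pt3 k)"
  unfolding fam_def
proof (intro conjI)
  assume k: "1 \<le> k"
  show "2 \<le> 8*k+6" by simp
  show "\<forall>b\<in>blocks k 3. \<forall>x\<in>b. Rf (C03 k) (pt3 k) x = b"
  proof -
    have A1: "\<forall>b\<in>(\<lambda>i. {2*i, 4*k+2+2*i}) ` {1..2*k+1}. \<forall>x\<in>b. Rf (C03 k) (pt3 k) x = b"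
      by (rule img_ok) (erule r3a, erule r3b)
    have A2: "\<forall>b\<in>(\<lambda>j. {2*j+1, 6*k+5+2*j}) ` {0..k}. \<forall>x\<in>b. Rf (C03 k) (pt3 k) x = b"
      by (rule img_ok) (erule r3c, erule r3d)
    have A3: "\<forall>b\<in>(\<lambda>j. {2*k+3+2*j, 4*k+5+2*j}) ` {0..<k}. \<forall>x\<in>b. Rf (C03 k) (pt3 k) x = b"
      by (rule img_ok) (erule r3e, erule r3f)
    have A4: "\<forall>b\<in>{C03 k}. \<forall>x\<in>b. Rf (C03 k) (pt3 k) x = b"
      by (simp add: Rf_def)
    show ?thesis unfolding blocks3 ball_Un using A1 A2 A3 A4 by blast
  qed
  show "\<forall>x<8*k+6. x \<notin> C03 k \<longrightarrow> (\<exists>b\<in>blocks k 3. x \<in> b)"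
  proof (intro allI impI)
    fix x assume x: "x < 8*k+6" and xc: "x \<notin> C03 k"
    define I1 where "I1 = (\<lambda>i. {2*i, 4*k+2+2*i}) ` {1..2*k+1}"
    define I2 where "I2 = (\<lambda>j. {2*j+1, 6*k+5+2*j}) ` {0..k}"
    define I3 where "I3 = (\<lambda>j. {2*k+3+2*j, 4*k+5+2*j}) ` {0..<k}"
    have "(\<exists>b\<in>I1. x \<in> b) \<or> (\<exists>b\<in>I2. x \<in> b) \<or> (\<exists>b\<in>I3. x \<in> b)"
    proof (cases "even x")
      case True
      then obtain i where i: "x = 2*i" by (auto elim!: evenE)
      have i1: "1 \<le> i" using i xc by (auto simp: C03_def)
      show ?thesis
      proof (cases "i \<le> 2*k+1")
        case True then show ?thesis unfolding I1_def using i i1 by (intro disjI1 cov_f[where i=i]) auto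
      next
        case False then show ?thesis unfolding I1_def using x i
          by (intro disjI1 cov_g[where i="i - (2*k+1)"]) auto
      qed
    next
      case False
      then obtain i where i: "x = 2*i+1" by (auto elim!: oddE)
      have i2: "i \<noteq> 2*k+1" using i xc by (auto simp: C03_def)
      consider "i \<le> k" | "k < i \<and> i \<le> 2*k" | "2*k+1 < i \<and> i \<le> 3*k+1" | "3*k+1 < i" using i2 by linarith
      then show ?thesis
      proof cases
        case 1 then show ?thesis unfolding I2_def using i by (intro disjI2 disjI1 cov_f[where i=i]) auto
      next
        case 2 then show ?thesis unfolding I3_def using i by (intro disjI2 disjI2 cov_f[where i="i-(k+1)"]) auto
      next
        case 3 then show ?thesis unfolding I3_def using i by (intro disjI2 disjI2 cov_g[where i="i-(2*k+2)"]) auto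
      next
        case 4 then show ?thesis unfolding I2_def using i x by (intro disjI2 disjI1 cov_g[where i="i-(3*k+2)"]) auto
      qed
    qed
    then show "\<exists>b\<in>blocks k 3. x \<in> b" unfolding blocks3 I1_def[symmetric] I2_def[symmetric] I3_def[symmetric]
      by blast
  qed
  show "C03 k \<in> blocks k 3 \<or> C03 k = {0}"
    unfolding blocks3 by blast
  show "0 \<in> C03 k" "C03 k \<subseteq> {..<8*k+6}" by (auto simp: C03_def)
  show "\<forall>c\<in>C03 k. prd (8*k+6) c \<notin> C03 k" using k by (auto simp: C03_def prd_def)
  show "\<forall>x<8*k+6. x \<notin> C03 k \<longrightarrow> pt3 k x \<noteq> x \<and> pt3 k x \<noteq> 0 \<and> pt3 k x < 8*k+6 \<and> (even (pt3 k x) \<longleftrightarrow> even x)"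
    using st3 by blast
qed

lemma up3:
  assumes k: "1 \<le> k"
  shows "local_antimagic (8*k+6) (blocks k 3) {0..<8*k+6} (cLabel (8*k+6)) \<and> card (vsum (8*k+6) (blocks k 3) {0..<8*k+6} (cLabel (8*k+6)) ` qmap (8*k+6) (blocks k 3) ` {0..<8*k+6}) \<le> 3"
    "local_antimagic (8*k+6) (blocks k 3) ({0..<8*k+6}-{0}) (\<lambda>j. cLabel (8*k+6) j - 1) \<and> card (vsum (8*k+6) (blocks k 3) ({0..<8*k+6}-{0}) (\<lambda>j. cLabel (8*k+6) j - 1) ` qmap (8*k+6) (blocks k 3) ` {0..<8*k+6}) \<le> 3"
    "local_antimagic (8*k+6) (blocks k 3) ({0..<8*k+6}-{1}) (\<lambda>j. (8*k+6) - cLabel (8*k+6) j) \<and> card (vsum (8*k+6) (blocks k 3) ({0..<8*k+6}-{1}) (\<lambda>j. (8*k+6) - cLabel (8*k+6) j) ` qmap (8*k+6) (blocks k 3) ` {0..<8*k+6}) \<le> 3"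
proof -
  note F = fam3[OF k]
  have cl: "cLabel (8*k+6) (8*k+6 - 1) = 4*k+4" using cLabel_last_even[of "8*k+6"] by simp
  show "local_antimagic (8*k+6) (blocks k 3) {0..<8*k+6} (cLabel (8*k+6)) \<and> card (vsum (8*k+6) (blocks k 3) {0..<8*k+6} (cLabel (8*k+6)) ` qmap (8*k+6) (blocks k 3) ` {0..<8*k+6}) \<le> 3"
  proof (rule upper_L0[OF F _ _ _])
    show "(\<Sum>c\<in>C03 k. gE {0..<8*k+6} (cLabel (8*k+6)) c + gE {0..<8*k+6} (cLabel (8*k+6)) (prd (8*k+6) c)) = 12*k+12"
      unfolding C03_def
    proof (rule Zpair)
      show "gE {0..<8*k+6} (cLabel (8*k+6)) (0) + gE {0..<8*k+6} (cLabel (8*k+6)) (prd (8*k+6) (0)) = 4*k+5"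
        using Z0_L0[of "8*k+6"] cl k by simp
      show "gE {0..<8*k+6} (cLabel (8*k+6)) (4*k+3) + gE {0..<8*k+6} (cLabel (8*k+6)) (prd (8*k+6) (4*k+3)) = (8*k+6)+1"
        by (rule H0_od) (use k in auto)
    qed (use k in simp_all)
  qed (use k in simp_all)
  show "local_antimagic (8*k+6) (blocks k 3) ({0..<8*k+6}-{0}) (\<lambda>j. cLabel (8*k+6) j - 1) \<and> card (vsum (8*k+6) (blocks k 3) ({0..<8*k+6}-{0}) (\<lambda>j. cLabel (8*k+6) j - 1) ` qmap (8*k+6) (blocks k 3) ` {0..<8*k+6}) \<le> 3"
  proof (rule upper_L1[OF F _ _ _])
    show "(\<Sum>c\<in>C03 k. gE ({0..<8*k+6}-{0}) (\<lambda>j. cLabel (8*k+6) j - 1) c + gE ({0..<8*k+6}-{0}) (\<lambda>j. cLabel (8*k+6) j - 1) (prd (8*k+6) c)) = 12*k+8"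
      unfolding C03_def
    proof (rule Zpair)
      show "gE ({0..<8*k+6}-{0}) (\<lambda>j. cLabel (8*k+6) j - 1) (0) + gE ({0..<8*k+6}-{0}) (\<lambda>j. cLabel (8*k+6) j - 1) (prd (8*k+6) (0)) = 4*k+3"
        using Z0_L1[of "8*k+6"] cl k by simp
      show "gE ({0..<8*k+6}-{0}) (\<lambda>j. cLabel (8*k+6) j - 1) (4*k+3) + gE ({0..<8*k+6}-{0}) (\<lambda>j. cLabel (8*k+6) j - 1) (prd (8*k+6) (4*k+3)) = (8*k+6) - 1"
        by (rule H1_od) (use k in auto)
    qed (use k in simp_all)
  qed (use k in simp_all)
  show "local_antimagic (8*k+6) (blocks k 3) ({0..<8*k+6}-{1}) (\<lambda>j. (8*k+6) - cLabel (8*k+6) j) \<and> card (vsum (8*k+6) (blocks k 3) ({0..<8*k+6}-{1}) (\<lambda>j. (8*k+6) - cLabel (8*k+6) j) ` qmap (8*k+6) (blocks k 3) ` {0..<8*k+6}) \<le> 3"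
  proof (rule upper_L2[OF F _ _ _ _])
    show "3 \<le> 8*k+6" using k by simp
    show "(\<Sum>c\<in>C03 k. gE ({0..<8*k+6}-{1}) (\<lambda>j. (8*k+6) - cLabel (8*k+6) j) c + gE ({0..<8*k+6}-{1}) (\<lambda>j. (8*k+6) - cLabel (8*k+6) j) (prd (8*k+6) c)) = 20*k+12"
      unfolding C03_def
    proof (rule Zpair)
      show "gE ({0..<8*k+6}-{1}) (\<lambda>j. (8*k+6) - cLabel (8*k+6) j) (0) + gE ({0..<8*k+6}-{1}) (\<lambda>j. (8*k+6) - cLabel (8*k+6) j) (prd (8*k+6) (0)) = 12*k+7"
        using Z0_L2[of "8*k+6"] cl k by simp
      show "gE ({0..<8*k+6}-{1}) (\<lambda>j. (8*k+6) - cLabel (8*k+6) j) (4*k+3) + gE ({0..<8*k+6}-{1}) (\<lambda>j. (8*k+6) - cLabel (8*k+6) j) (prd (8*k+6) (4*k+3)) = (8*k+6) - 1"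
        by (rule H2_od) (use k in auto)
    qed (use k in simp_all)
  qed (use k in simp_all)
qed

lemma thm3:
  assumes k: "1 \<le> k" and e: "e = 0 \<or> e = 1"
  shows "chi_la (8*k+6) (blocks k 3) {0..<8*k+6} = 3 \<and> chi_la (8*k+6) (blocks k 3) ({0..<8*k+6}-{e}) = 3"
proof (rule assemble[OF up3[OF k] _ _ _ e])
  fix f a b
  show "local_antimagic (8*k+6) (blocks k 3) {0..<8*k+6} f \<Longrightarrow> \<forall>i<8*k+6. vsum (8*k+6) (blocks k 3) {0..<8*k+6} f (qmap (8*k+6) (blocks k 3) i) \<in> {a, b} \<Longrightarrow> False"
    by (erule low_mixed[OF fam3[OF k], where z="4*k+3"]) (use k in \<open>auto simp: C03_def\<close>)
  show "local_antimagic (8*k+6) (blocks k 3) ({0..<8*k+6}-{0}) f \<Longrightarrow> \<forall>i<8*k+6. vsum (8*k+6) (blocks k 3) ({0..<8*k+6}-{0}) f (qmap (8*k+6) (blocks k 3) i) \<in> {a, b} \<Longrightarrow> False"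
    by (erule low_mixed[OF fam3[OF k], where z="4*k+3"]) (use k in \<open>auto simp: C03_def\<close>)
  show "local_antimagic (8*k+6) (blocks k 3) ({0..<8*k+6}-{1}) f \<Longrightarrow> \<forall>i<8*k+6. vsum (8*k+6) (blocks k 3) ({0..<8*k+6}-{1}) f (qmap (8*k+6) (blocks k 3) i) \<in> {a, b} \<Longrightarrow> False"
    by (erule low_mixed[OF fam3[OF k], where z="4*k+3"]) (use k in \<open>auto simp: C03_def\<close>)
qed

definition pt4 :: "nat \<Rightarrow> nat \<Rightarrow> nat" where
  "pt4 k x = (if even x then (if x \<le> 4*k then x+4*k else x-4*k)
     else if x < 2*k then x+2*k else if x < 4*k then x-2*k
     else if x < 6*k then x+2*k else x-2*k)"

definition C04 :: "nat \<Rightarrow> nat set" where "C04 k = {0}"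

lemma blocks4: "blocks k 4 = (\<lambda>i. {2*i, 4*k+2*i}) ` {1..2*k} \<union> (\<lambda>j. {2*j+1, 2*k+2*j+1}) ` {0..<k}
      \<union> (\<lambda>j. {4*k+2*j+1, 6*k+2*j+1}) ` {0..<k}"
  by (simp add: blocks_def)

lemma r4a: "i \<in> {1..2*k} \<Longrightarrow> Rf (C04 k) (pt4 k) (2*i) = {2*i, 4*k+2*i}"
  by (auto simp: Rf_def pt4_def C04_def; presburger)
lemma r4b: "i \<in> {1..2*k} \<Longrightarrow> Rf (C04 k) (pt4 k) (4*k+2*i) = {2*i, 4*k+2*i}"
  by (auto simp: Rf_def pt4_def C04_def; presburger)
lemma r4c: "j \<in> {0..<k} \<Longrightarrow> Rf (C04 k) (pt4 k) (2*j+1) = {2*j+1, 2*k+2*j+1}"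
  by (auto simp: Rf_def pt4_def C04_def; presburger)
lemma r4d: "j \<in> {0..<k} \<Longrightarrow> Rf (C04 k) (pt4 k) (2*k+2*j+1) = {2*j+1, 2*k+2*j+1}"
  by (auto simp: Rf_def pt4_def C04_def; presburger)
lemma r4e: "j \<in> {0..<k} \<Longrightarrow> Rf (C04 k) (pt4 k) (4*k+2*j+1) = {4*k+2*j+1, 6*k+2*j+1}"
  by (auto simp: Rf_def pt4_def C04_def; presburger)
lemma r4f: "j \<in> {0..<k} \<Longrightarrow> Rf (C04 k) (pt4 k) (6*k+2*j+1) = {4*k+2*j+1, 6*k+2*j+1}"
  by (auto simp: Rf_def pt4_def C04_def; presburger)

lemma st4: "x < 8*k+1 \<Longrightarrow> x \<notin> C04 k \<Longrightarrow>
   pt4 k x \<noteq> x \<and> pt4 k x \<noteq> 0 \<and> pt4 k x < 8*k+1 \<and> (even (pt4 k x) \<longleftrightarrow> even x)"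
  unfolding pt4_def C04_def by auto presburger+

lemma fam4: "1 \<le> k \<Longrightarrow> fam (8*k+1) (blocks k 4) (C04 k) (pt4 k)"
  unfolding fam_def
proof (intro conjI)
  assume k: "1 \<le> k"
  show "2 \<le> 8*k+1" using k by simp
  show "\<forall>b\<in>blocks k 4. \<forall>x\<in>b. Rf (C04 k) (pt4 k) x = b"
  proof -
    have A1: "\<forall>b\<in>(\<lambda>i. {2*i, 4*k+2*i}) ` {1..2*k}. \<forall>x\<in>b. Rf (C04 k) (pt4 k) x = b"
      by (rule img_ok) (erule r4a, erule r4b)
    have A2: "\<forall>b\<in>(\<lambda>j. {2*j+1, 2*k+2*j+1}) ` {0..<k}. \<forall>x\<in>b. Rf (C04 k) (pt4 k) x = b"
      by (rule img_ok) (erule r4c, erule r4d)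
    have A3: "\<forall>b\<in>(\<lambda>j. {4*k+2*j+1, 6*k+2*j+1}) ` {0..<k}. \<forall>x\<in>b. Rf (C04 k) (pt4 k) x = b"
      by (rule img_ok) (erule r4e, erule r4f)
    show ?thesis unfolding blocks4 ball_Un using A1 A2 A3 by blast
  qed
  show "\<forall>x<8*k+1. x \<notin> C04 k \<longrightarrow> (\<exists>b\<in>blocks k 4. x \<in> b)"
  proof (intro allI impI)
    fix x assume x: "x < 8*k+1" and xc: "x \<notin> C04 k"
    define I1 where "I1 = (\<lambda>i. {2*i, 4*k+2*i}) ` {1..2*k}"
    define I2 where "I2 = (\<lambda>j. {2*j+1, 2*k+2*j+1}) ` {0..<k}"
    define I3 where "I3 = (\<lambda>j. {4*k+2*j+1, 6*k+2*j+1}) ` {0..<k}"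
    have "(\<exists>b\<in>I1. x \<in> b) \<or> (\<exists>b\<in>I2. x \<in> b) \<or> (\<exists>b\<in>I3. x \<in> b)"
    proof (cases "even x")
      case True
      then obtain i where i: "x = 2*i" by (auto elim!: evenE)
      have i1: "1 \<le> i" using i xc by (auto simp: C04_def)
      show ?thesis
      proof (cases "i \<le> 2*k")
        case True then show ?thesis unfolding I1_def using i i1 by (intro disjI1 cov_f[where i=i]) auto
      next
        case False then show ?thesis unfolding I1_def using x i
          by (intro disjI1 cov_g[where i="i - 2*k"]) auto
      qed
    next
      case False
      then obtain i where i: "x = 2*i+1" by (auto elim!: oddE)
      consider "i < k" | "k \<le> i \<and> i < 2*k" | "2*k \<le> i \<and> i < 3*k" | "3*k \<le> i" by linarith
      then show ?thesis
      proof cases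
        case 1 then show ?thesis unfolding I2_def using i by (intro disjI2 disjI1 cov_f[where i=i]) auto
      next
        case 2 then show ?thesis unfolding I2_def using i by (intro disjI2 disjI1 cov_g[where i="i-k"]) auto
      next
        case 3 then show ?thesis unfolding I3_def using i by (intro disjI2 disjI2 cov_f[where i="i-2*k"]) auto
      next
        case 4 then show ?thesis unfolding I3_def using i x by (intro disjI2 disjI2 cov_g[where i="i-3*k"]) auto
      qed
    qed
    then show "\<exists>b\<in>blocks k 4. x \<in> b" unfolding blocks4 I1_def[symmetric] I2_def[symmetric] I3_def[symmetric]
      by blast
  qed
  show "C04 k \<in> blocks k 4 \<or> C04 k = {0}"
    by (simp add: C04_def)
  show "0 \<in> C04 k" "C04 k \<subseteq> {..<8*k+1}" by (auto simp: C04_def)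
  show "\<forall>c\<in>C04 k. prd (8*k+1) c \<notin> C04 k" using k by (auto simp: C04_def prd_def)
  show "\<forall>x<8*k+1. x \<notin> C04 k \<longrightarrow> pt4 k x \<noteq> x \<and> pt4 k x \<noteq> 0 \<and> pt4 k x < 8*k+1 \<and> (even (pt4 k x) \<longleftrightarrow> even x)"
    using st4 by blast
qed

lemma low4c:
  assumes k: "1 \<le> k" and la: "local_antimagic (8*k+1) (blocks k 4) ({0..<8*k+1}-{0}) f"
    and vals: "\<forall>i<8*k+1. vsum (8*k+1) (blocks k 4) ({0..<8*k+1}-{0}) f (qmap (8*k+1) (blocks k 4) i) \<in> {a, b}"
  shows False
proof -
  define E where "E = {0..<8*k+1}-{0}"
  have E: "E \<subseteq> {..<8*k+1}" "\<And>j. 2 \<le> j \<Longrightarrow> j < 8*k+1 \<Longrightarrow> j \<in> E" by (auto simp: E_def)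
  define S where "S i = vsum (8*k+1) (blocks k 4) E f (qmap (8*k+1) (blocks k 4) i)" for i
  define H where "H c = gE E f c + gE E f (prd (8*k+1) c)" for c
  note F = fam4[OF k]
  have n4: "4 \<le> 8*k+1" using k by simp
  have v: "\<forall>i<8*k+1. S i \<in> {a, b}" using vals by (simp add: S_def E_def)
  note C = core[OF la[folded E_def] E(1) E(2) n4 S_def v]
  have n1: "2 \<le> 8*k+1-1" "8*k+1-1 < 8*k+1" using k by auto
  have "S (8*k+1-1) = (if even (8*k+1-1) then S 2 else S 3)" using C(1) n1 by blast
  then have "S (8*k+1-1) = S 2" by simp
  then have S0: "S 0 = S 3" using C(3) C(4) by auto
  have "1 \<in> E" using k by (simp add: E_def)
  then have "S 1 \<noteq> S 2" using C(7) by blast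
  then have S1: "S 1 = S 3" using C(5) by auto
  have SO: "S (2*m+1) = S 3" if "2*m+1 < 8*k+1" for m
  proof (cases "m = 0")
    case True then show ?thesis using S1 by simp
  next
    case False
    then have "2 \<le> 2*m+1" by simp
    then have "S (2*m+1) = (if even (2*m+1) then S 2 else S 3)" using C(1) that by blast
    then show ?thesis by simp
  qed
  have SO2: "S (4*k+2*m+1) = S 3" if "m < k" for m
  proof -
    have e: "4*k+2*m+1 = 2*(2*k+m)+1" by simp
    show ?thesis unfolding e by (rule SO) (use that in simp)
  qed
  have pO1: "S (2*j+1) = H (2*j+1) + H (2*k+2*j+1)" if "j < k" for j
    unfolding S_def H_def by (rule fam_vsum2[OF F _ E(1) r4c]) (use that in auto)
  have pO2: "S (4*k+2*j+1) = H (4*k+2*j+1) + H (6*k+2*j+1)" if "j < k" for j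
    unfolding S_def H_def by (rule fam_vsum2[OF F _ E(1) r4e]) (use that in auto)
  have p0: "S 0 = H 0"
    unfolding S_def H_def using fam_vsum_C0[OF F _ E(1), of 0 f] by (simp add: C04_def)
  define Od where "Od m = H (2*m+1)" for m
  have "(2*k+1) * S 3 = S 0 + (\<Sum>j<k. S (2*j+1)) + (\<Sum>j<k. S (4*k+2*j+1))"
    using S0 SO SO2 k by simp
  also have "\<dots> = H 0 + (\<Sum>j<k. H (2*j+1) + H (2*k+2*j+1)) + (\<Sum>j<k. H (4*k+2*j+1) + H (6*k+2*j+1))"
    using pO1 pO2 p0 by simp
  also have "\<dots> = H 0 + (((\<Sum>j<k. Od j) + (\<Sum>j<k. Od (k+j))) + ((\<Sum>j<k. Od (2*k+j)) + (\<Sum>j<k. Od (2*k+(k+j)))))"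
  proof -
    have o0: "(\<Sum>j<k. H (2*j+1)) = (\<Sum>j<k. Od j)" by (simp add: Od_def)
    have o1: "(\<Sum>j<k. H (2*k+2*j+1)) = (\<Sum>j<k. Od (k+j))"
      unfolding Od_def by (rule sum_reidx) simp
    have o2: "(\<Sum>j<k. H (4*k+2*j+1)) = (\<Sum>j<k. Od (2*k+j))"
      unfolding Od_def by (rule sum_reidx) simp
    have o3: "(\<Sum>j<k. H (6*k+2*j+1)) = (\<Sum>j<k. Od (2*k+(k+j)))"
      unfolding Od_def by (rule sum_reidx) simp
    show ?thesis unfolding sum.distrib o0 o1 o2 o3 by (simp add: add.assoc)
  qed
  also have "\<dots> = H 0 + ((\<Sum>j<k+k. Od j) + (\<Sum>j<k+k. Od (2*k+j)))"
    by (simp only: sum_split)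
  also have "\<dots> = H 0 + ((\<Sum>j<2*k. Od j) + (\<Sum>j<2*k. Od (2*k+j)))"
    by (simp add: mult_2)
  also have "\<dots> = H 0 + (\<Sum>j<2*k+2*k. Od j)"
    by (simp only: sum_split)
  also have "(\<Sum>j<2*k+2*k. Od j) = (\<Sum>j<2*(4*k). gE E f j)"
  proof -
    have "(\<Sum>j<2*k+2*k. Od j) = (\<Sum>m<4*k. gE E f (2*m+1) + gE E f (prd (8*k+1) (2*m+1)))"
      by (simp add: Od_def H_def)
    also have "\<dots> = (\<Sum>j<2*(4*k). gE E f j)" by (rule odd_H')
    finally show ?thesis .
  qed
  also have "H 0 = gE E f (8*k)" by (simp add: H_def gE_def E_def prd_def)
  also have "gE E f (8*k) + (\<Sum>j<2*(4*k). gE E f j) = (\<Sum>j<8*k+1. gE E f j)"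
    by simp
  also have "\<dots> = (\<Sum>j\<in>E. f j)" by (rule sum_gE[OF E(1)])
  also have "\<dots> = (8*k) * (8*k+1) div 2"
  proof -
    have "card E = 8*k" by (simp add: E_def)
    then have "bij_betw f E {1..8*k}" using la by (simp add: local_antimagic_def E_def)
    then show ?thesis by (rule bij_sum)
  qed
  also have "\<dots> = (4*k) * (8*k+1)" by simp
  finally have A: "(2*k+1) * S 3 = (4*k) * (8*k+1)" .
  have "S 3 = gE E f (8*k)" using S0 p0 \<open>H 0 = gE E f (8*k)\<close> by simp
  also have "\<dots> = f (8*k)" using k by (simp add: gE_def E_def)
  also have "\<dots> \<le> 8*k"
  proof -
    have "card E = 8*k" by (simp add: E_def)
    then have "bij_betw f E {1..8*k}" using la by (simp add: local_antimagic_def E_def)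
    moreover have "8*k \<in> E" using k by (simp add: E_def)
    ultimately show ?thesis by (auto dest: bij_betwE)
  qed
  finally have B: "S 3 \<le> 8*k" .
  have "(4*k) * (8*k+1) \<le> (2*k+1) * (8*k)" using A B by (metis mult_le_mono2)
  also have "(2*k+1) * (8*k) = (4*k) * (4*k+2)" by (simp add: algebra_simps)
  finally have "8*k+1 \<le> 4*k+2" using k by simp
  then show False using k by simp
qed

lemma up4:
  assumes k: "1 \<le> k"
  shows "local_antimagic (8*k+1) (blocks k 4) {0..<8*k+1} (cLabel (8*k+1)) \<and> card (vsum (8*k+1) (blocks k 4) {0..<8*k+1} (cLabel (8*k+1)) ` qmap (8*k+1) (blocks k 4) ` {0..<8*k+1}) \<le> 3"
    "local_antimagic (8*k+1) (blocks k 4) ({0..<8*k+1}-{0}) (\<lambda>j. cLabel (8*k+1) j - 1) \<and> card (vsum (8*k+1) (blocks k 4) ({0..<8*k+1}-{0}) (\<lambda>j. cLabel (8*k+1) j - 1) ` qmap (8*k+1) (blocks k 4) ` {0..<8*k+1}) \<le> 3"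
    "local_antimagic (8*k+1) (blocks k 4) ({0..<8*k+1}-{1}) (\<lambda>j. (8*k+1) - cLabel (8*k+1) j) \<and> card (vsum (8*k+1) (blocks k 4) ({0..<8*k+1}-{1}) (\<lambda>j. (8*k+1) - cLabel (8*k+1) j) ` qmap (8*k+1) (blocks k 4) ` {0..<8*k+1}) \<le> 3"
proof -
  note F = fam4[OF k]
  have cl: "cLabel (8*k+1) (8*k+1 - 1) = 4*k+1" using cLabel_last_odd[of "8*k+1"] by simp
  show "local_antimagic (8*k+1) (blocks k 4) {0..<8*k+1} (cLabel (8*k+1)) \<and> card (vsum (8*k+1) (blocks k 4) {0..<8*k+1} (cLabel (8*k+1)) ` qmap (8*k+1) (blocks k 4) ` {0..<8*k+1}) \<le> 3"
  proof (rule upper_L0[OF F _ _ _])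
    show "(\<Sum>c\<in>C04 k. gE {0..<8*k+1} (cLabel (8*k+1)) c + gE {0..<8*k+1} (cLabel (8*k+1)) (prd (8*k+1) c)) = 4*k+2"
      unfolding C04_def
      using Z0_L0[of "8*k+1"] cl k by simp
  qed (use k in simp_all)
  show "local_antimagic (8*k+1) (blocks k 4) ({0..<8*k+1}-{0}) (\<lambda>j. cLabel (8*k+1) j - 1) \<and> card (vsum (8*k+1) (blocks k 4) ({0..<8*k+1}-{0}) (\<lambda>j. cLabel (8*k+1) j - 1) ` qmap (8*k+1) (blocks k 4) ` {0..<8*k+1}) \<le> 3"
  proof (rule upper_L1[OF F _ _ _])
    show "(\<Sum>c\<in>C04 k. gE ({0..<8*k+1}-{0}) (\<lambda>j. cLabel (8*k+1) j - 1) c + gE ({0..<8*k+1}-{0}) (\<lambda>j. cLabel (8*k+1) j - 1) (prd (8*k+1) c)) = 4*k"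
      unfolding C04_def
      using Z0_L1[of "8*k+1"] cl k by simp
  qed (use k in simp_all)
  show "local_antimagic (8*k+1) (blocks k 4) ({0..<8*k+1}-{1}) (\<lambda>j. (8*k+1) - cLabel (8*k+1) j) \<and> card (vsum (8*k+1) (blocks k 4) ({0..<8*k+1}-{1}) (\<lambda>j. (8*k+1) - cLabel (8*k+1) j) ` qmap (8*k+1) (blocks k 4) ` {0..<8*k+1}) \<le> 3"
  proof (rule upper_L2[OF F _ _ _ _])
    show "3 \<le> 8*k+1" using k by simp
    show "(\<Sum>c\<in>C04 k. gE ({0..<8*k+1}-{1}) (\<lambda>j. (8*k+1) - cLabel (8*k+1) j) c + gE ({0..<8*k+1}-{1}) (\<lambda>j. (8*k+1) - cLabel (8*k+1) j) (prd (8*k+1) c)) = 12*k"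
      unfolding C04_def
      using Z0_L2[of "8*k+1"] cl k by simp
  qed (use k in simp_all)
qed

lemma thm4:
  assumes k: "1 \<le> k" and e: "e = 0 \<or> e = 1"
  shows "chi_la (8*k+1) (blocks k 4) {0..<8*k+1} = 3 \<and> chi_la (8*k+1) (blocks k 4) ({0..<8*k+1}-{e}) = 3"
proof (rule assemble[OF up4[OF k] _ _ _ e])
  fix f a b
  show "local_antimagic (8*k+1) (blocks k 4) {0..<8*k+1} f \<Longrightarrow> \<forall>i<8*k+1. vsum (8*k+1) (blocks k 4) {0..<8*k+1} f (qmap (8*k+1) (blocks k 4) i) \<in> {a, b} \<Longrightarrow> False"
    by (erule low_edge0[OF fam4[OF k], where w="2*k+1"]) (use k in \<open>auto simp: C04_def Rf_def pt4_def\<close>)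
  show "local_antimagic (8*k+1) (blocks k 4) ({0..<8*k+1}-{0}) f \<Longrightarrow> \<forall>i<8*k+1. vsum (8*k+1) (blocks k 4) ({0..<8*k+1}-{0}) f (qmap (8*k+1) (blocks k 4) i) \<in> {a, b} \<Longrightarrow> False"
    by (rule low4c[OF k])
  show "local_antimagic (8*k+1) (blocks k 4) ({0..<8*k+1}-{1}) f \<Longrightarrow> \<forall>i<8*k+1. vsum (8*k+1) (blocks k 4) ({0..<8*k+1}-{1}) f (qmap (8*k+1) (blocks k 4) i) \<in> {a, b} \<Longrightarrow> False"
    by (erule low_edge0[OF fam4[OF k], where w="2*k+1"]) (use k in \<open>auto simp: C04_def Rf_def pt4_def\<close>)
qed

definition pt5 :: "nat \<Rightarrow> nat \<Rightarrow> nat" where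
  "pt5 k x = (if even x then (if x \<le> 4*k+2 then x+4*k+2 else x-(4*k+2))
     else if x \<le> 2*k+1 then x+6*k+2 else if x \<le> 4*k+1 then x+2*k
     else if x \<le> 6*k+1 then x-2*k else x-(6*k+2))"

definition C05 :: "nat \<Rightarrow> nat set" where "C05 k = {0}"

lemma blocks5: "blocks k 5 = (\<lambda>i. {2*i, 4*k+2+2*i}) ` {1..2*k+1} \<union> (\<lambda>j. {2*j+1, 6*k+3+2*j}) ` {0..k}
      \<union> (\<lambda>j. {2*k+3+2*j, 4*k+3+2*j}) ` {0..<k}"
  by (simp add: blocks_def)

lemma r5a: "i \<in> {1..2*k+1} \<Longrightarrow> Rf (C05 k) (pt5 k) (2*i) = {2*i, 4*k+2+2*i}"
  by (auto simp: Rf_def pt5_def C05_def; presburger)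
lemma r5b: "i \<in> {1..2*k+1} \<Longrightarrow> Rf (C05 k) (pt5 k) (4*k+2+2*i) = {2*i, 4*k+2+2*i}"
  by (auto simp: Rf_def pt5_def C05_def; presburger)
lemma r5c: "j \<in> {0..k} \<Longrightarrow> Rf (C05 k) (pt5 k) (2*j+1) = {2*j+1, 6*k+3+2*j}"
  by (auto simp: Rf_def pt5_def C05_def; presburger)
lemma r5d: "j \<in> {0..k} \<Longrightarrow> Rf (C05 k) (pt5 k) (6*k+3+2*j) = {2*j+1, 6*k+3+2*j}"
  by (auto simp: Rf_def pt5_def C05_def; presburger)
lemma r5e: "j \<in> {0..<k} \<Longrightarrow> Rf (C05 k) (pt5 k) (2*k+3+2*j) = {2*k+3+2*j, 4*k+3+2*j}"
  by (auto simp: Rf_def pt5_def C05_def; presburger)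
lemma r5f: "j \<in> {0..<k} \<Longrightarrow> Rf (C05 k) (pt5 k) (4*k+3+2*j) = {2*k+3+2*j, 4*k+3+2*j}"
  by (auto simp: Rf_def pt5_def C05_def; presburger)

lemma st5: "x < 8*k+5 \<Longrightarrow> x \<notin> C05 k \<Longrightarrow>
   pt5 k x \<noteq> x \<and> pt5 k x \<noteq> 0 \<and> pt5 k x < 8*k+5 \<and> (even (pt5 k x) \<longleftrightarrow> even x)"
  unfolding pt5_def C05_def by auto presburger+

lemma fam5: "1 \<le> k \<Longrightarrow> fam (8*k+5) (blocks k 5) (C05 k) (pt5 k)"
  unfolding fam_def
proof (intro conjI)
  assume k: "1 \<le> k"
  show "2 \<le> 8*k+5" using k by simp
  show "\<forall>b\<in>blocks k 5. \<forall>x\<in>b. Rf (C05 k) (pt5 k) x = b"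
  proof -
    have A1: "\<forall>b\<in>(\<lambda>i. {2*i, 4*k+2+2*i}) ` {1..2*k+1}. \<forall>x\<in>b. Rf (C05 k) (pt5 k) x = b"
      by (rule img_ok) (erule r5a, erule r5b)
    have A2: "\<forall>b\<in>(\<lambda>j. {2*j+1, 6*k+3+2*j}) ` {0..k}. \<forall>x\<in>b. Rf (C05 k) (pt5 k) x = b"
      by (rule img_ok) (erule r5c, erule r5d)
    have A3: "\<forall>b\<in>(\<lambda>j. {2*k+3+2*j, 4*k+3+2*j}) ` {0..<k}. \<forall>x\<in>b. Rf (C05 k) (pt5 k) x = b"
      by (rule img_ok) (erule r5e, erule r5f)
    show ?thesis unfolding blocks5 ball_Un using A1 A2 A3 by blast
  qed
  show "\<forall>x<8*k+5. x \<notin> C05 k \<longrightarrow> (\<exists>b\<in>blocks k 5. x \<in> b)"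
  proof (intro allI impI)
    fix x assume x: "x < 8*k+5" and xc: "x \<notin> C05 k"
    define I1 where "I1 = (\<lambda>i. {2*i, 4*k+2+2*i}) ` {1..2*k+1}"
    define I2 where "I2 = (\<lambda>j. {2*j+1, 6*k+3+2*j}) ` {0..k}"
    define I3 where "I3 = (\<lambda>j. {2*k+3+2*j, 4*k+3+2*j}) ` {0..<k}"
    have "(\<exists>b\<in>I1. x \<in> b) \<or> (\<exists>b\<in>I2. x \<in> b) \<or> (\<exists>b\<in>I3. x \<in> b)"
    proof (cases "even x")
      case True
      then obtain i where i: "x = 2*i" by (auto elim!: evenE)
      have i1: "1 \<le> i" using i xc by (auto simp: C05_def)
      show ?thesis
      proof (cases "i \<le> 2*k+1")
        case True then show ?thesis unfolding I1_def using i i1 by (intro disjI1 cov_f[where i=i]) auto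
      next
        case False then show ?thesis unfolding I1_def using x i
          by (intro disjI1 cov_g[where i="i - (2*k+1)"]) auto
      qed
    next
      case False
      then obtain i where i: "x = 2*i+1" by (auto elim!: oddE)
      consider "i \<le> k" | "k < i \<and> i \<le> 2*k" | "2*k < i \<and> i \<le> 3*k" | "3*k < i" by linarith
      then show ?thesis
      proof cases
        case 1 then show ?thesis unfolding I2_def using i by (intro disjI2 disjI1 cov_f[where i=i]) auto
      next
        case 2 then show ?thesis unfolding I3_def using i by (intro disjI2 disjI2 cov_f[where i="i-(k+1)"]) auto
      next
        case 3 then show ?thesis unfolding I3_def using i by (intro disjI2 disjI2 cov_g[where i="i-(2*k+1)"]) auto
      next
        case 4 then show ?thesis unfolding I2_def using i x by (intro disjI2 disjI1 cov_g[where i="i-(3*k+1)"]) auto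
      qed
    qed
    then show "\<exists>b\<in>blocks k 5. x \<in> b" unfolding blocks5 I1_def[symmetric] I2_def[symmetric] I3_def[symmetric]
      by blast
  qed
  show "C05 k \<in> blocks k 5 \<or> C05 k = {0}"
    by (simp add: C05_def)
  show "0 \<in> C05 k" "C05 k \<subseteq> {..<8*k+5}" by (auto simp: C05_def)
  show "\<forall>c\<in>C05 k. prd (8*k+5) c \<notin> C05 k" using k by (auto simp: C05_def prd_def)
  show "\<forall>x<8*k+5. x \<notin> C05 k \<longrightarrow> pt5 k x \<noteq> x \<and> pt5 k x \<noteq> 0 \<and> pt5 k x < 8*k+5 \<and> (even (pt5 k x) \<longleftrightarrow> even x)"
    using st5 by blast
qed

lemma low5c:
  assumes k: "1 \<le> k" and la: "local_antimagic (8*k+5) (blocks k 5) ({0..<8*k+5}-{0}) f"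
    and vals: "\<forall>i<8*k+5. vsum (8*k+5) (blocks k 5) ({0..<8*k+5}-{0}) f (qmap (8*k+5) (blocks k 5) i) \<in> {a, b}"
  shows False
proof -
  define E where "E = {0..<8*k+5}-{0}"
  have E: "E \<subseteq> {..<8*k+5}" "\<And>j. 2 \<le> j \<Longrightarrow> j < 8*k+5 \<Longrightarrow> j \<in> E" by (auto simp: E_def)
  define S where "S i = vsum (8*k+5) (blocks k 5) E f (qmap (8*k+5) (blocks k 5) i)" for i
  define H where "H c = gE E f c + gE E f (prd (8*k+5) c)" for c
  note F = fam5[OF k]
  have n4: "4 \<le> 8*k+5" using k by simp
  have v: "\<forall>i<8*k+5. S i \<in> {a, b}" using vals by (simp add: S_def E_def)
  note C = core[OF la[folded E_def] E(1) E(2) n4 S_def v]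
  have n1: "2 \<le> 8*k+5-1" "8*k+5-1 < 8*k+5" using k by auto
  have "S (8*k+5-1) = (if even (8*k+5-1) then S 2 else S 3)" using C(1) n1 by blast
  then have "S (8*k+5-1) = S 2" by simp
  then have S0: "S 0 = S 3" using C(3) C(4) by auto
  have "1 \<in> E" using k by (simp add: E_def)
  then have "S 1 \<noteq> S 2" using C(7) by blast
  then have S1: "S 1 = S 3" using C(5) by auto
  have SO: "S (2*m+1) = S 3" if "2*m+1 < 8*k+5" for m
  proof (cases "m = 0")
    case True then show ?thesis using S1 by simp
  next
    case False
    then have "2 \<le> 2*m+1" by simp
    then have "S (2*m+1) = (if even (2*m+1) then S 2 else S 3)" using C(1) that by blast
    then show ?thesis by simp
  qed
  have SO2: "S (2*k+3+2*m) = S 3" if "m < k" for m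
  proof -
    have e: "2*k+3+2*m = 2*(k+1+m)+1" by simp
    show ?thesis unfolding e by (rule SO) (use that in simp)
  qed
  have pO1: "S (2*j+1) = H (2*j+1) + H (6*k+3+2*j)" if "j < k+1" for j
    unfolding S_def H_def by (rule fam_vsum2[OF F _ E(1) r5c]) (use that in auto)
  have pO2: "S (2*k+3+2*j) = H (2*k+3+2*j) + H (4*k+3+2*j)" if "j < k" for j
    unfolding S_def H_def by (rule fam_vsum2[OF F _ E(1) r5e]) (use that in auto)
  have p0: "S 0 = H 0"
    unfolding S_def H_def using fam_vsum_C0[OF F _ E(1), of 0 f] by (simp add: C05_def)
  define Od where "Od m = H (2*m+1)" for m
  have "(2*k+2) * S 3 = S 0 + (\<Sum>j<k+1. S (2*j+1)) + (\<Sum>j<k. S (2*k+3+2*j))"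
    using S0 SO SO2 k by simp
  also have "\<dots> = H 0 + (\<Sum>j<k+1. H (2*j+1) + H (6*k+3+2*j)) + (\<Sum>j<k. H (2*k+3+2*j) + H (4*k+3+2*j))"
    using pO1 pO2 p0 by simp
  also have "\<dots> = H 0 + (((\<Sum>j<k+1. Od j) + (\<Sum>j<k. Od ((k+1)+j))) + ((\<Sum>j<k. Od ((2*k+1)+j)) + (\<Sum>j<k+1. Od ((2*k+1)+(k+j)))))"
  proof -
    have o0: "(\<Sum>j<k+1. H (2*j+1)) = (\<Sum>j<k+1. Od j)" by (simp add: Od_def)
    have o1: "(\<Sum>j<k+1. H (6*k+3+2*j)) = (\<Sum>j<k+1. Od ((2*k+1)+(k+j)))"
      unfolding Od_def by (rule sum_reidx) simp
    have o2: "(\<Sum>j<k. H (2*k+3+2*j)) = (\<Sum>j<k. Od ((k+1)+j))"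
      unfolding Od_def by (rule sum_reidx) simp
    have o3: "(\<Sum>j<k. H (4*k+3+2*j)) = (\<Sum>j<k. Od ((2*k+1)+j))"
      unfolding Od_def by (rule sum_reidx) simp
    show ?thesis unfolding sum.distrib o0 o1 o2 o3 by (simp only: add_ac)
  qed
  also have "\<dots> = H 0 + ((\<Sum>j<(k+1)+k. Od j) + (\<Sum>j<k+(k+1). Od ((2*k+1)+j)))"
    by (simp only: sum_split)
  also have "\<dots> = H 0 + ((\<Sum>j<2*k+1. Od j) + (\<Sum>j<2*k+1. Od ((2*k+1)+j)))"
  proof -
    have e: "(k+1)+k = 2*k+1" "k+(k+1) = 2*k+1" by simp_all
    show ?thesis unfolding e ..
  qed
  also have "\<dots> = H 0 + (\<Sum>j<(2*k+1)+(2*k+1). Od j)"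
    by (simp only: sum_split)
  also have "(\<Sum>j<(2*k+1)+(2*k+1). Od j) = (\<Sum>j<2*(4*k+2). gE E f j)"
  proof -
    have "(\<Sum>j<(2*k+1)+(2*k+1). Od j) = (\<Sum>m<4*k+2. gE E f (2*m+1) + gE E f (prd (8*k+5) (2*m+1)))"
      by (simp add: Od_def H_def)
    also have "\<dots> = (\<Sum>j<2*(4*k+2). gE E f j)" by (rule odd_H')
    finally show ?thesis .
  qed
  also have "H 0 = gE E f (8*k+4)"
  proof -
    have "prd (8*k+5) 0 = 8*k+4" by (simp add: prd_def)
    then show ?thesis by (simp add: H_def gE_def E_def)
  qed
  also have "gE E f (8*k+4) + (\<Sum>j<2*(4*k+2). gE E f j) = (\<Sum>j<8*k+5. gE E f j)"
  proof -
    have e: "(8::nat)*k+5 = Suc (2*(4*k+2))" by simp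
    have e2: "(2::nat)*(4*k+2) = 8*k+4" by simp
    show ?thesis unfolding e sum.lessThan_Suc e2 by (rule add.commute)
  qed
  also have "\<dots> = (\<Sum>j\<in>E. f j)" by (rule sum_gE[OF E(1)])
  also have "\<dots> = (8*k+4) * (8*k+4+1) div 2"
  proof -
    have "card E = 8*k+4" by (simp add: E_def)
    moreover have "bij_betw f E {1..card E}" using la unfolding local_antimagic_def E_def by blast
    ultimately have "bij_betw f E {1..8*k+4}" by simp
    then show ?thesis by (rule bij_sum)
  qed
  also have "\<dots> = (4*k+2) * (8*k+5)"
  proof -
    have "(8*k+4) * (8*k+4+1) = 2 * ((4*k+2) * (8*k+5))" by (simp add: algebra_simps)
    then show ?thesis by (simp only:)
  qed
  finally have A: "(2*k+2) * S 3 = (4*k+2) * (8*k+5)" .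
  have "S 3 = gE E f (8*k+4)" using S0 p0 \<open>H 0 = gE E f (8*k+4)\<close> by simp
  also have "\<dots> = f (8*k+4)" using k by (simp add: gE_def E_def)
  also have "\<dots> \<le> 8*k+4"
  proof -
    have "card E = 8*k+4" by (simp add: E_def)
    moreover have "bij_betw f E {1..card E}" using la unfolding local_antimagic_def E_def by blast
    ultimately have "bij_betw f E {1..8*k+4}" by simp
    moreover have "8*k+4 \<in> E" using k by (simp add: E_def)
    ultimately show ?thesis by (auto dest: bij_betwE)
  qed
  finally have B: "S 3 \<le> 8*k+4" .
  have "(4*k+2) * (8*k+5) \<le> (2*k+2) * (8*k+4)" using A B by (metis mult_le_mono2)
  also have "(2*k+2) * (8*k+4) = (4*k+2) * (4*k+4)" by (simp add: algebra_simps)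
  finally have X: "(4*k+2) * (8*k+5) \<le> (4*k+2) * (4*k+4)" .
  have "0 < 4*k+2 \<longrightarrow> 8*k+5 \<le> 4*k+4" by (rule iffD1[OF mult_le_cancel1 X])
  then show False by simp
qed

lemma up5:
  assumes k: "1 \<le> k"
  shows "local_antimagic (8*k+5) (blocks k 5) {0..<8*k+5} (cLabel (8*k+5)) \<and> card (vsum (8*k+5) (blocks k 5) {0..<8*k+5} (cLabel (8*k+5)) ` qmap (8*k+5) (blocks k 5) ` {0..<8*k+5}) \<le> 3"
    "local_antimagic (8*k+5) (blocks k 5) ({0..<8*k+5}-{0}) (\<lambda>j. cLabel (8*k+5) j - 1) \<and> card (vsum (8*k+5) (blocks k 5) ({0..<8*k+5}-{0}) (\<lambda>j. cLabel (8*k+5) j - 1) ` qmap (8*k+5) (blocks k 5) ` {0..<8*k+5}) \<le> 3"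
    "local_antimagic (8*k+5) (blocks k 5) ({0..<8*k+5}-{1}) (\<lambda>j. (8*k+5) - cLabel (8*k+5) j) \<and> card (vsum (8*k+5) (blocks k 5) ({0..<8*k+5}-{1}) (\<lambda>j. (8*k+5) - cLabel (8*k+5) j) ` qmap (8*k+5) (blocks k 5) ` {0..<8*k+5}) \<le> 3"
proof -
  note F = fam5[OF k]
  have cl: "cLabel (8*k+5) (8*k+5 - 1) = 4*k+3" using cLabel_last_odd[of "8*k+5"] by simp
  show "local_antimagic (8*k+5) (blocks k 5) {0..<8*k+5} (cLabel (8*k+5)) \<and> card (vsum (8*k+5) (blocks k 5) {0..<8*k+5} (cLabel (8*k+5)) ` qmap (8*k+5) (blocks k 5) ` {0..<8*k+5}) \<le> 3"
  proof (rule upper_L0[OF F _ _ _])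
    show "(\<Sum>c\<in>C05 k. gE {0..<8*k+5} (cLabel (8*k+5)) c + gE {0..<8*k+5} (cLabel (8*k+5)) (prd (8*k+5) c)) = 4*k+4"
      unfolding C05_def
      using Z0_L0[of "8*k+5"] cl k by simp
  qed (use k in simp_all)
  show "local_antimagic (8*k+5) (blocks k 5) ({0..<8*k+5}-{0}) (\<lambda>j. cLabel (8*k+5) j - 1) \<and> card (vsum (8*k+5) (blocks k 5) ({0..<8*k+5}-{0}) (\<lambda>j. cLabel (8*k+5) j - 1) ` qmap (8*k+5) (blocks k 5) ` {0..<8*k+5}) \<le> 3"
  proof (rule upper_L1[OF F _ _ _])
    show "(\<Sum>c\<in>C05 k. gE ({0..<8*k+5}-{0}) (\<lambda>j. cLabel (8*k+5) j - 1) c + gE ({0..<8*k+5}-{0}) (\<lambda>j. cLabel (8*k+5) j - 1) (prd (8*k+5) c)) = 4*k+2"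
      unfolding C05_def
      using Z0_L1[of "8*k+5"] cl k by simp
  qed (use k in simp_all)
  show "local_antimagic (8*k+5) (blocks k 5) ({0..<8*k+5}-{1}) (\<lambda>j. (8*k+5) - cLabel (8*k+5) j) \<and> card (vsum (8*k+5) (blocks k 5) ({0..<8*k+5}-{1}) (\<lambda>j. (8*k+5) - cLabel (8*k+5) j) ` qmap (8*k+5) (blocks k 5) ` {0..<8*k+5}) \<le> 3"
  proof (rule upper_L2[OF F _ _ _ _])
    show "3 \<le> 8*k+5" using k by simp
    show "(\<Sum>c\<in>C05 k. gE ({0..<8*k+5}-{1}) (\<lambda>j. (8*k+5) - cLabel (8*k+5) j) c + gE ({0..<8*k+5}-{1}) (\<lambda>j. (8*k+5) - cLabel (8*k+5) j) (prd (8*k+5) c)) = 12*k+6"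
      unfolding C05_def
      using Z0_L2[of "8*k+5"] cl k by simp
  qed (use k in simp_all)
qed

lemma thm5:
  assumes k: "1 \<le> k" and e: "e = 0 \<or> e = 1"
  shows "chi_la (8*k+5) (blocks k 5) {0..<8*k+5} = 3 \<and> chi_la (8*k+5) (blocks k 5) ({0..<8*k+5}-{e}) = 3"
proof (rule assemble[OF up5[OF k] _ _ _ e])
  fix f a b
  show "local_antimagic (8*k+5) (blocks k 5) {0..<8*k+5} f \<Longrightarrow> \<forall>i<8*k+5. vsum (8*k+5) (blocks k 5) {0..<8*k+5} f (qmap (8*k+5) (blocks k 5) i) \<in> {a, b} \<Longrightarrow> False"
    by (erule low_edge0[OF fam5[OF k], where w="6*k+3"]) (use k in \<open>auto simp: C05_def Rf_def pt5_def\<close>)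
  show "local_antimagic (8*k+5) (blocks k 5) ({0..<8*k+5}-{0}) f \<Longrightarrow> \<forall>i<8*k+5. vsum (8*k+5) (blocks k 5) ({0..<8*k+5}-{0}) f (qmap (8*k+5) (blocks k 5) i) \<in> {a, b} \<Longrightarrow> False"
    by (rule low5c[OF k])
  show "local_antimagic (8*k+5) (blocks k 5) ({0..<8*k+5}-{1}) f \<Longrightarrow> \<forall>i<8*k+5. vsum (8*k+5) (blocks k 5) ({0..<8*k+5}-{1}) f (qmap (8*k+5) (blocks k 5) i) \<in> {a, b} \<Longrightarrow> False"
    by (erule low_edge0[OF fam5[OF k], where w="6*k+3"]) (use k in \<open>auto simp: C05_def Rf_def pt5_def\<close>)
qed

definition pt6 :: "nat \<Rightarrow> nat \<Rightarrow> nat" where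
  "pt6 k x = (if even x then (if x \<le> 2*k then x+4*k else if x \<le> 4*k then x+4*k+2
       else if x \<le> 6*k then x-4*k else x-(4*k+2))
     else if x < 2*k then 8*k+2-x else if x \<le> 4*k+1 then x+2*k
     else if x \<le> 6*k+1 then x-2*k else 8*k+2-x)"

definition C06 :: "nat \<Rightarrow> nat set" where "C06 k = {0, 2*k+1, 6*k+2}"

lemma blocks6: "blocks k 6 = (\<lambda>i. {2*i, 4*k+2*i}) ` {1..k} \<union> (\<lambda>i. {2*k+2*i, 6*k+2+2*i}) ` {1..k}
      \<union> (\<lambda>j. {2*j+1, 8*k+1-2*j}) ` {0..<k} \<union> (\<lambda>j. {2*k+3+2*j, 4*k+3+2*j}) ` {0..<k}
      \<union> {C06 k}"
  by (simp add: blocks_def C06_def)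

lemma r6a: "i \<in> {1..k} \<Longrightarrow> Rf (C06 k) (pt6 k) (2*i) = {2*i, 4*k+2*i}"
  by (auto simp: Rf_def pt6_def C06_def; presburger)
lemma r6b: "i \<in> {1..k} \<Longrightarrow> Rf (C06 k) (pt6 k) (4*k+2*i) = {2*i, 4*k+2*i}"
  by (auto simp: Rf_def pt6_def C06_def; presburger)
lemma r6c: "i \<in> {1..k} \<Longrightarrow> Rf (C06 k) (pt6 k) (2*k+2*i) = {2*k+2*i, 6*k+2+2*i}"
  by (auto simp: Rf_def pt6_def C06_def; presburger)
lemma r6d: "i \<in> {1..k} \<Longrightarrow> Rf (C06 k) (pt6 k) (6*k+2+2*i) = {2*k+2*i, 6*k+2+2*i}"
  by (auto simp: Rf_def pt6_def C06_def; presburger)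
lemma r6e: "j \<in> {0..<k} \<Longrightarrow> Rf (C06 k) (pt6 k) (2*j+1) = {2*j+1, 8*k+1-2*j}"
  by (auto simp: Rf_def pt6_def C06_def; presburger)
lemma r6f: "j \<in> {0..<k} \<Longrightarrow> Rf (C06 k) (pt6 k) (8*k+1-2*j) = {2*j+1, 8*k+1-2*j}"
  by (auto simp: Rf_def pt6_def C06_def; presburger)
lemma r6g: "j \<in> {0..<k} \<Longrightarrow> Rf (C06 k) (pt6 k) (2*k+3+2*j) = {2*k+3+2*j, 4*k+3+2*j}"
  by (auto simp: Rf_def pt6_def C06_def; presburger)
lemma r6h: "j \<in> {0..<k} \<Longrightarrow> Rf (C06 k) (pt6 k) (4*k+3+2*j) = {2*k+3+2*j, 4*k+3+2*j}"
  by (auto simp: Rf_def pt6_def C06_def; presburger)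

lemma st6: "x < 8*k+3 \<Longrightarrow> x \<notin> C06 k \<Longrightarrow>
   pt6 k x \<noteq> x \<and> pt6 k x \<noteq> 0 \<and> pt6 k x < 8*k+3 \<and> (even (pt6 k x) \<longleftrightarrow> even x)"
  unfolding pt6_def C06_def by auto presburger+

lemma fam6: "1 \<le> k \<Longrightarrow> fam (8*k+3) (blocks k 6) (C06 k) (pt6 k)"
  unfolding fam_def
proof (intro conjI)
  assume k: "1 \<le> k"
  show "2 \<le> 8*k+3" by simp
  show "\<forall>b\<in>blocks k 6. \<forall>x\<in>b. Rf (C06 k) (pt6 k) x = b"
  proof -
    have A1: "\<forall>b\<in>(\<lambda>i. {2*i, 4*k+2*i}) ` {1..k}. \<forall>x\<in>b. Rf (C06 k) (pt6 k) x = b"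
      by (rule img_ok) (erule r6a, erule r6b)
    have A2: "\<forall>b\<in>(\<lambda>i. {2*k+2*i, 6*k+2+2*i}) ` {1..k}. \<forall>x\<in>b. Rf (C06 k) (pt6 k) x = b"
      by (rule img_ok) (erule r6c, erule r6d)
    have A3: "\<forall>b\<in>(\<lambda>j. {2*j+1, 8*k+1-2*j}) ` {0..<k}. \<forall>x\<in>b. Rf (C06 k) (pt6 k) x = b"
      by (rule img_ok) (erule r6e, erule r6f)
    have A4: "\<forall>b\<in>(\<lambda>j. {2*k+3+2*j, 4*k+3+2*j}) ` {0..<k}. \<forall>x\<in>b. Rf (C06 k) (pt6 k) x = b"
      by (rule img_ok) (erule r6g, erule r6h)
    have A5: "\<forall>b\<in>{C06 k}. \<forall>x\<in>b. Rf (C06 k) (pt6 k) x = b"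
      by (simp add: Rf_def)
    show ?thesis unfolding blocks6 ball_Un using A1 A2 A3 A4 A5 by blast
  qed
  show "\<forall>x<8*k+3. x \<notin> C06 k \<longrightarrow> (\<exists>b\<in>blocks k 6. x \<in> b)"
  proof (intro allI impI)
    fix x assume x: "x < 8*k+3" and xc: "x \<notin> C06 k"
    define I1 where "I1 = (\<lambda>i. {2*i, 4*k+2*i}) ` {1..k}"
    define I2 where "I2 = (\<lambda>i. {2*k+2*i, 6*k+2+2*i}) ` {1..k}"
    define I3 where "I3 = (\<lambda>j. {2*j+1, 8*k+1-2*j}) ` {0..<k}"
    define I4 where "I4 = (\<lambda>j. {2*k+3+2*j, 4*k+3+2*j}) ` {0..<k}"
    have "(\<exists>b\<in>I1. x \<in> b) \<or> (\<exists>b\<in>I2. x \<in> b) \<or> (\<exists>b\<in>I3. x \<in> b) \<or> (\<exists>b\<in>I4. x \<in> b)"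
    proof (cases "even x")
      case True
      then obtain i where i: "x = 2*i" by (auto elim!: evenE)
      have i1: "1 \<le> i" "i \<noteq> 3*k+1" using i xc by (auto simp: C06_def)
      consider "i \<le> k" | "k < i \<and> i \<le> 2*k" | "2*k < i \<and> i \<le> 3*k" | "3*k+1 < i" using i1 by linarith
      then show ?thesis
      proof cases
        case 1 then show ?thesis unfolding I1_def using i i1 by (intro disjI1 cov_f[where i=i]) auto
      next
        case 2 then show ?thesis unfolding I2_def using i by (intro disjI2 disjI1 cov_f[where i="i-k"]) auto
      next
        case 3 then show ?thesis unfolding I1_def using i by (intro disjI1 cov_g[where i="i-2*k"]) auto
      next
        case 4 then show ?thesis unfolding I2_def using i x by (intro disjI2 disjI1 cov_g[where i="i-(3*k+1)"]) auto
      qed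
    next
      case False
      then obtain i where i: "x = 2*i+1" by (auto elim!: oddE)
      have i2: "i \<noteq> k" using i xc by (auto simp: C06_def)
      consider "i < k" | "k < i \<and> i \<le> 2*k" | "2*k < i \<and> i \<le> 3*k" | "3*k < i" using i2 by linarith
      then show ?thesis
      proof cases
        case 1 then show ?thesis unfolding I3_def using i by (intro disjI2 disjI2 disjI1 cov_f[where i=i]) auto
      next
        case 2 then show ?thesis unfolding I4_def using i by (intro disjI2 disjI2 disjI2 cov_f[where i="i-(k+1)"]) auto
      next
        case 3 then show ?thesis unfolding I4_def using i by (intro disjI2 disjI2 disjI2 cov_g[where i="i-(2*k+1)"]) auto
      next
        case 4 then show ?thesis unfolding I3_def using i x by (intro disjI2 disjI2 disjI1 cov_g[where i="4*k-i"]) auto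
      qed
    qed
    then show "\<exists>b\<in>blocks k 6. x \<in> b" unfolding blocks6 I1_def[symmetric] I2_def[symmetric] I3_def[symmetric] I4_def[symmetric]
      by blast
  qed
  show "C06 k \<in> blocks k 6 \<or> C06 k = {0}"
    unfolding blocks6 by blast
  show "0 \<in> C06 k" "C06 k \<subseteq> {..<8*k+3}" by (auto simp: C06_def)
  show "\<forall>c\<in>C06 k. prd (8*k+3) c \<notin> C06 k" using k by (auto simp: C06_def prd_def)
  show "\<forall>x<8*k+3. x \<notin> C06 k \<longrightarrow> pt6 k x \<noteq> x \<and> pt6 k x \<noteq> 0 \<and> pt6 k x < 8*k+3 \<and> (even (pt6 k x) \<longleftrightarrow> even x)"
    using st6 by blast
qed

lemma up6:
  assumes k: "1 \<le> k"
  shows "local_antimagic (8*k+3) (blocks k 6) {0..<8*k+3} (cLabel (8*k+3)) \<and> card (vsum (8*k+3) (blocks k 6) {0..<8*k+3} (cLabel (8*k+3)) ` qmap (8*k+3) (blocks k 6) ` {0..<8*k+3}) \<le> 3"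
    "local_antimagic (8*k+3) (blocks k 6) ({0..<8*k+3}-{0}) (\<lambda>j. cLabel (8*k+3) j - 1) \<and> card (vsum (8*k+3) (blocks k 6) ({0..<8*k+3}-{0}) (\<lambda>j. cLabel (8*k+3) j - 1) ` qmap (8*k+3) (blocks k 6) ` {0..<8*k+3}) \<le> 3"
    "local_antimagic (8*k+3) (blocks k 6) ({0..<8*k+3}-{1}) (\<lambda>j. (8*k+3) - cLabel (8*k+3) j) \<and> card (vsum (8*k+3) (blocks k 6) ({0..<8*k+3}-{1}) (\<lambda>j. (8*k+3) - cLabel (8*k+3) j) ` qmap (8*k+3) (blocks k 6) ` {0..<8*k+3}) \<le> 3"
proof -
  note F = fam6[OF k]
  have cl: "cLabel (8*k+3) (8*k+3 - 1) = 4*k+2" using cLabel_last_odd[of "8*k+3"] by simp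
  show "local_antimagic (8*k+3) (blocks k 6) {0..<8*k+3} (cLabel (8*k+3)) \<and> card (vsum (8*k+3) (blocks k 6) {0..<8*k+3} (cLabel (8*k+3)) ` qmap (8*k+3) (blocks k 6) ` {0..<8*k+3}) \<le> 3"
  proof (rule upper_L0[OF F _ _ _])
    show "(\<Sum>c\<in>C06 k. gE {0..<8*k+3} (cLabel (8*k+3)) c + gE {0..<8*k+3} (cLabel (8*k+3)) (prd (8*k+3) c)) = 20*k+12"
      unfolding C06_def
    proof (rule Ztriple)
      show "gE {0..<8*k+3} (cLabel (8*k+3)) (0) + gE {0..<8*k+3} (cLabel (8*k+3)) (prd (8*k+3) (0)) = 4*k+3"
        using Z0_L0[of "8*k+3"] cl k by simp
      show "gE {0..<8*k+3} (cLabel (8*k+3)) (2*k+1) + gE {0..<8*k+3} (cLabel (8*k+3)) (prd (8*k+3) (2*k+1)) = (8*k+3)+1"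
        by (rule H0_od) (use k in auto)
      show "gE {0..<8*k+3} (cLabel (8*k+3)) (6*k+2) + gE {0..<8*k+3} (cLabel (8*k+3)) (prd (8*k+3) (6*k+2)) = (8*k+3)+2"
        by (rule H0_ev) (use k in auto)
    qed (use k in simp_all)
  qed (use k in simp_all)
  show "local_antimagic (8*k+3) (blocks k 6) ({0..<8*k+3}-{0}) (\<lambda>j. cLabel (8*k+3) j - 1) \<and> card (vsum (8*k+3) (blocks k 6) ({0..<8*k+3}-{0}) (\<lambda>j. cLabel (8*k+3) j - 1) ` qmap (8*k+3) (blocks k 6) ` {0..<8*k+3}) \<le> 3"
  proof (rule upper_L1[OF F _ _ _])
    show "(\<Sum>c\<in>C06 k. gE ({0..<8*k+3}-{0}) (\<lambda>j. cLabel (8*k+3) j - 1) c + gE ({0..<8*k+3}-{0}) (\<lambda>j. cLabel (8*k+3) j - 1) (prd (8*k+3) c)) = 20*k+6"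
      unfolding C06_def
    proof (rule Ztriple)
      show "gE ({0..<8*k+3}-{0}) (\<lambda>j. cLabel (8*k+3) j - 1) (0) + gE ({0..<8*k+3}-{0}) (\<lambda>j. cLabel (8*k+3) j - 1) (prd (8*k+3) (0)) = 4*k+1"
        using Z0_L1[of "8*k+3"] cl k by simp
      show "gE ({0..<8*k+3}-{0}) (\<lambda>j. cLabel (8*k+3) j - 1) (2*k+1) + gE ({0..<8*k+3}-{0}) (\<lambda>j. cLabel (8*k+3) j - 1) (prd (8*k+3) (2*k+1)) = (8*k+3) - 1"
        by (rule H1_od) (use k in auto)
      show "gE ({0..<8*k+3}-{0}) (\<lambda>j. cLabel (8*k+3) j - 1) (6*k+2) + gE ({0..<8*k+3}-{0}) (\<lambda>j. cLabel (8*k+3) j - 1) (prd (8*k+3) (6*k+2)) = 8*k+3"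
        by (rule H1_ev) (use k in auto)
    qed (use k in simp_all)
  qed (use k in simp_all)
  show "local_antimagic (8*k+3) (blocks k 6) ({0..<8*k+3}-{1}) (\<lambda>j. (8*k+3) - cLabel (8*k+3) j) \<and> card (vsum (8*k+3) (blocks k 6) ({0..<8*k+3}-{1}) (\<lambda>j. (8*k+3) - cLabel (8*k+3) j) ` qmap (8*k+3) (blocks k 6) ` {0..<8*k+3}) \<le> 3"
  proof (rule upper_L2[OF F _ _ _ _])
    show "3 \<le> 8*k+3" using k by simp
    show "(\<Sum>c\<in>C06 k. gE ({0..<8*k+3}-{1}) (\<lambda>j. (8*k+3) - cLabel (8*k+3) j) c + gE ({0..<8*k+3}-{1}) (\<lambda>j. (8*k+3) - cLabel (8*k+3) j) (prd (8*k+3) c)) = 28*k+6"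
      unfolding C06_def
    proof (rule Ztriple)
      show "gE ({0..<8*k+3}-{1}) (\<lambda>j. (8*k+3) - cLabel (8*k+3) j) (0) + gE ({0..<8*k+3}-{1}) (\<lambda>j. (8*k+3) - cLabel (8*k+3) j) (prd (8*k+3) (0)) = 12*k+3"
        using Z0_L2[of "8*k+3"] cl k by simp
      show "gE ({0..<8*k+3}-{1}) (\<lambda>j. (8*k+3) - cLabel (8*k+3) j) (2*k+1) + gE ({0..<8*k+3}-{1}) (\<lambda>j. (8*k+3) - cLabel (8*k+3) j) (prd (8*k+3) (2*k+1)) = (8*k+3) - 1"
        by (rule H2_od) (use k in auto)
      show "gE ({0..<8*k+3}-{1}) (\<lambda>j. (8*k+3) - cLabel (8*k+3) j) (6*k+2) + gE ({0..<8*k+3}-{1}) (\<lambda>j. (8*k+3) - cLabel (8*k+3) j) (prd (8*k+3) (6*k+2)) = (8*k+3) - 2"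
        by (rule H2_ev) (use k in auto)
    qed (use k in simp_all)
  qed (use k in simp_all)
qed

lemma thm6:
  assumes k: "1 \<le> k" and e: "e = 0 \<or> e = 1"
  shows "chi_la (8*k+3) (blocks k 6) {0..<8*k+3} = 3 \<and> chi_la (8*k+3) (blocks k 6) ({0..<8*k+3}-{e}) = 3"
proof (rule assemble[OF up6[OF k] _ _ _ e])
  fix f a b
  show "local_antimagic (8*k+3) (blocks k 6) {0..<8*k+3} f \<Longrightarrow> \<forall>i<8*k+3. vsum (8*k+3) (blocks k 6) {0..<8*k+3} f (qmap (8*k+3) (blocks k 6) i) \<in> {a, b} \<Longrightarrow> False"
    by (erule low_mixed[OF fam6[OF k], where z="6*k+2"]) (use k in \<open>auto simp: C06_def\<close>)
  show "local_antimagic (8*k+3) (blocks k 6) ({0..<8*k+3}-{0}) f \<Longrightarrow> \<forall>i<8*k+3. vsum (8*k+3) (blocks k 6) ({0..<8*k+3}-{0}) f (qmap (8*k+3) (blocks k 6) i) \<in> {a, b} \<Longrightarrow> False"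
    by (erule low_mixed[OF fam6[OF k], where z="6*k+2"]) (use k in \<open>auto simp: C06_def\<close>)
  show "local_antimagic (8*k+3) (blocks k 6) ({0..<8*k+3}-{1}) f \<Longrightarrow> \<forall>i<8*k+3. vsum (8*k+3) (blocks k 6) ({0..<8*k+3}-{1}) f (qmap (8*k+3) (blocks k 6) i) \<in> {a, b} \<Longrightarrow> False"
    by (erule low_mixed[OF fam6[OF k], where z="6*k+2"]) (use k in \<open>auto simp: C06_def\<close>)
qed

definition pt7 :: "nat \<Rightarrow> nat \<Rightarrow> nat" where
  "pt7 k x = (if even x then (if x \<le> 2*k then x+4*k+4 else if x \<le> 4*k+4 then x+4*k+2
       else if x \<le> 6*k+4 then x-(4*k+4) else x-(4*k+2))
     else if x \<le> 4*k+1 then (if x mod 4 = 1 then 4*k+3 + x div 2 else 6*k+6 + x div 2)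
     else if x \<le> 6*k+3 then 2*x-(8*k+5) else 2*x-(12*k+11))"

definition C07 :: "nat \<Rightarrow> nat set" where "C07 k = {0, 2*k+2, 6*k+5}"

lemma blocks7: "blocks k 7 = (\<lambda>i. {2*i, 4*k+4+2*i}) ` {1..k} \<union> (\<lambda>i. {2*k+2+2*i, 6*k+4+2*i}) ` {1..k+1}
      \<union> (\<lambda>j. {4*j+1, 4*k+3+2*j}) ` {0..k} \<union> (\<lambda>j. {4*j+3, 6*k+7+2*j}) ` {0..<k}
      \<union> {C07 k}"
  by (simp add: blocks_def C07_def)

lemma r7a: "i \<in> {1..k} \<Longrightarrow> Rf (C07 k) (pt7 k) (2*i) = {2*i, 4*k+4+2*i}"
  by (auto simp: Rf_def pt7_def C07_def; presburger)
lemma r7b: "i \<in> {1..k} \<Longrightarrow> Rf (C07 k) (pt7 k) (4*k+4+2*i) = {2*i, 4*k+4+2*i}"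
  by (auto simp: Rf_def pt7_def C07_def; presburger)
lemma r7c: "i \<in> {1..k+1} \<Longrightarrow> Rf (C07 k) (pt7 k) (2*k+2+2*i) = {2*k+2+2*i, 6*k+4+2*i}"
  by (auto simp: Rf_def pt7_def C07_def; presburger)
lemma r7d: "i \<in> {1..k+1} \<Longrightarrow> Rf (C07 k) (pt7 k) (6*k+4+2*i) = {2*k+2+2*i, 6*k+4+2*i}"
  by (auto simp: Rf_def pt7_def C07_def; presburger)
lemma r7e: "j \<in> {0..k} \<Longrightarrow> Rf (C07 k) (pt7 k) (4*j+1) = {4*j+1, 4*k+3+2*j}"
  by (auto simp: Rf_def pt7_def C07_def; presburger)
lemma r7f: "j \<in> {0..k} \<Longrightarrow> Rf (C07 k) (pt7 k) (4*k+3+2*j) = {4*j+1, 4*k+3+2*j}"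
  by (auto simp: Rf_def pt7_def C07_def; presburger)
lemma r7g: "j \<in> {0..<k} \<Longrightarrow> Rf (C07 k) (pt7 k) (4*j+3) = {4*j+3, 6*k+7+2*j}"
  by (auto simp: Rf_def pt7_def C07_def; presburger)
lemma r7h: "j \<in> {0..<k} \<Longrightarrow> Rf (C07 k) (pt7 k) (6*k+7+2*j) = {4*j+3, 6*k+7+2*j}"
  by (auto simp: Rf_def pt7_def C07_def; presburger)

lemma pt7_a: "x = 4*j+1 \<Longrightarrow> x \<le> 4*k+1 \<Longrightarrow> pt7 k x = 4*k+3+2*j"
proof -
  assume x: "x = 4*j+1" "x \<le> 4*k+1"
  have m: "x mod 4 = 1" "x div 2 = 2*j" "odd x" using x(1) by presburger+
  show ?thesis unfolding pt7_def using m x(2) by simp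
qed

lemma pt7_b: "x = 4*j+3 \<Longrightarrow> x \<le> 4*k+1 \<Longrightarrow> pt7 k x = 6*k+7+2*j"
proof -
  assume x: "x = 4*j+3" "x \<le> 4*k+1"
  have m: "x mod 4 = 3" "x div 2 = 2*j+1" "odd x" using x(1) by presburger+
  show ?thesis unfolding pt7_def using m x(2) by simp
qed

lemma st7:
  assumes x: "x < 8*k+7" and xc: "x \<notin> C07 k"
  shows "pt7 k x \<noteq> x \<and> pt7 k x \<noteq> 0 \<and> pt7 k x < 8*k+7 \<and> (even (pt7 k x) \<longleftrightarrow> even x)"
proof (cases "even x")
  case True
  then obtain i where i: "x = 2*i" by (auto elim!: evenE)
  have "x \<noteq> 0" "x \<noteq> 2*k+2" using xc by (auto simp: C07_def)
  then show ?thesis using True x i unfolding pt7_def by auto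
next
  case False
  then obtain i where i: "x = 2*i+1" by (auto elim!: oddE)
  have x5: "x \<noteq> 6*k+5" using xc by (auto simp: C07_def)
  consider "i \<le> 2*k \<and> even i" | "i \<le> 2*k \<and> odd i" | "2*k < i \<and> i \<le> 3*k+1" | "3*k+2 < i" using x5 i by linarith
  then show ?thesis
  proof cases
    case 1
    then obtain j where j: "i = 2*j" by (auto elim!: evenE)
    have "pt7 k x = 4*k+3+2*j" by (rule pt7_a) (use i j 1 in auto)
    then show ?thesis using i j 1 by simp
  next
    case 2
    then obtain j where j: "i = 2*j+1" by (auto elim!: oddE)
    have "pt7 k x = 6*k+7+2*j" by (rule pt7_b) (use i j 2 in auto)
    then show ?thesis using i j 2 x by simp
  next
    case 3
    have "pt7 k x = 2*x-(8*k+5)" unfolding pt7_def using False i 3 by simp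
    then show ?thesis using i 3 by simp presburger
  next
    case 4
    have "pt7 k x = 2*x-(12*k+11)" unfolding pt7_def using False i 4 by simp
    then show ?thesis using i 4 x by simp presburger
  qed
qed

lemma fam7: "1 \<le> k \<Longrightarrow> fam (8*k+7) (blocks k 7) (C07 k) (pt7 k)"
  unfolding fam_def
proof (intro conjI)
  assume k: "1 \<le> k"
  show "2 \<le> 8*k+7" by simp
  show "\<forall>b\<in>blocks k 7. \<forall>x\<in>b. Rf (C07 k) (pt7 k) x = b"
  proof -
    have A1: "\<forall>b\<in>(\<lambda>i. {2*i, 4*k+4+2*i}) ` {1..k}. \<forall>x\<in>b. Rf (C07 k) (pt7 k) x = b"
      by (rule img_ok) (erule r7a, erule r7b)
    have A2: "\<forall>b\<in>(\<lambda>i. {2*k+2+2*i, 6*k+4+2*i}) ` {1..k+1}. \<forall>x\<in>b. Rf (C07 k) (pt7 k) x = b"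
      by (rule img_ok) (erule r7c, erule r7d)
    have A3: "\<forall>b\<in>(\<lambda>j. {4*j+1, 4*k+3+2*j}) ` {0..k}. \<forall>x\<in>b. Rf (C07 k) (pt7 k) x = b"
      by (rule img_ok) (erule r7e, erule r7f)
    have A4: "\<forall>b\<in>(\<lambda>j. {4*j+3, 6*k+7+2*j}) ` {0..<k}. \<forall>x\<in>b. Rf (C07 k) (pt7 k) x = b"
      by (rule img_ok) (erule r7g, erule r7h)
    have A5: "\<forall>b\<in>{C07 k}. \<forall>x\<in>b. Rf (C07 k) (pt7 k) x = b"
      by (simp add: Rf_def)
    show ?thesis unfolding blocks7 ball_Un using A1 A2 A3 A4 A5 by blast
  qed
  show "\<forall>x<8*k+7. x \<notin> C07 k \<longrightarrow> (\<exists>b\<in>blocks k 7. x \<in> b)"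
  proof (intro allI impI)
    fix x assume x: "x < 8*k+7" and xc: "x \<notin> C07 k"
    define I1 where "I1 = (\<lambda>i. {2*i, 4*k+4+2*i}) ` {1..k}"
    define I2 where "I2 = (\<lambda>i. {2*k+2+2*i, 6*k+4+2*i}) ` {1..k+1}"
    define I3 where "I3 = (\<lambda>j. {4*j+1, 4*k+3+2*j}) ` {0..k}"
    define I4 where "I4 = (\<lambda>j. {4*j+3, 6*k+7+2*j}) ` {0..<k}"
    have "(\<exists>b\<in>I1. x \<in> b) \<or> (\<exists>b\<in>I2. x \<in> b) \<or> (\<exists>b\<in>I3. x \<in> b) \<or> (\<exists>b\<in>I4. x \<in> b)"
    proof (cases "even x")
      case True
      then obtain i where i: "x = 2*i" by (auto elim!: evenE)
      have i1: "1 \<le> i" "i \<noteq> k+1" using i xc by (auto simp: C07_def)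
      consider "i \<le> k" | "k+1 < i \<and> i \<le> 2*k+2" | "2*k+2 < i \<and> i \<le> 3*k+2" | "3*k+2 < i" using i1 by linarith
      then show ?thesis
      proof cases
        case 1 then show ?thesis unfolding I1_def using i i1 by (intro disjI1 cov_f[where i=i]) auto
      next
        case 2 then show ?thesis unfolding I2_def using i by (intro disjI2 disjI1 cov_f[where i="i-(k+1)"]) auto
      next
        case 3 then show ?thesis unfolding I1_def using i by (intro disjI1 cov_g[where i="i-(2*k+2)"]) auto
      next
        case 4 then show ?thesis unfolding I2_def using i x by (intro disjI2 disjI1 cov_g[where i="i-(3*k+2)"]) auto
      qed
    next
      case False
      then obtain i where i: "x = 2*i+1" by (auto elim!: oddE)
      have i2: "i \<noteq> 3*k+2" using i xc by (auto simp: C07_def)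
      consider "i \<le> 2*k \<and> even i" | "i \<le> 2*k \<and> odd i" | "2*k < i \<and> i \<le> 3*k+1" | "3*k+2 < i" using i2 by linarith
      then show ?thesis
      proof cases
        case 1
        then obtain j where j: "i = 2*j" by (auto elim!: evenE)
        show ?thesis unfolding I3_def using i j 1 by (intro disjI2 disjI2 disjI1 cov_f[where i=j]) auto
      next
        case 2
        then obtain j where j: "i = 2*j+1" by (auto elim!: oddE)
        show ?thesis unfolding I4_def using i j 2 by (intro disjI2 disjI2 disjI2 cov_f[where i=j]) auto
      next
        case 3 then show ?thesis unfolding I3_def using i by (intro disjI2 disjI2 disjI1 cov_g[where i="i-(2*k+1)"]) auto
      next
        case 4 then show ?thesis unfolding I4_def using i x by (intro disjI2 disjI2 disjI2 cov_g[where i="i-(3*k+3)"]) auto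
      qed
    qed
    then show "\<exists>b\<in>blocks k 7. x \<in> b" unfolding blocks7 I1_def[symmetric] I2_def[symmetric] I3_def[symmetric] I4_def[symmetric]
      by blast
  qed
  show "C07 k \<in> blocks k 7 \<or> C07 k = {0}"
    unfolding blocks7 by blast
  show "0 \<in> C07 k" "C07 k \<subseteq> {..<8*k+7}" by (auto simp: C07_def)
  show "\<forall>c\<in>C07 k. prd (8*k+7) c \<notin> C07 k" using k by (auto simp: C07_def prd_def)
  show "\<forall>x<8*k+7. x \<notin> C07 k \<longrightarrow> pt7 k x \<noteq> x \<and> pt7 k x \<noteq> 0 \<and> pt7 k x < 8*k+7 \<and> (even (pt7 k x) \<longleftrightarrow> even x)"
    using st7 by blast
qed

lemma up7:
  assumes k: "1 \<le> k"
  shows "local_antimagic (8*k+7) (blocks k 7) {0..<8*k+7} (cLabel (8*k+7)) \<and> card (vsum (8*k+7) (blocks k 7) {0..<8*k+7} (cLabel (8*k+7)) ` qmap (8*k+7) (blocks k 7) ` {0..<8*k+7}) \<le> 3"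
    "local_antimagic (8*k+7) (blocks k 7) ({0..<8*k+7}-{0}) (\<lambda>j. cLabel (8*k+7) j - 1) \<and> card (vsum (8*k+7) (blocks k 7) ({0..<8*k+7}-{0}) (\<lambda>j. cLabel (8*k+7) j - 1) ` qmap (8*k+7) (blocks k 7) ` {0..<8*k+7}) \<le> 3"
    "local_antimagic (8*k+7) (blocks k 7) ({0..<8*k+7}-{1}) (\<lambda>j. (8*k+7) - cLabel (8*k+7) j) \<and> card (vsum (8*k+7) (blocks k 7) ({0..<8*k+7}-{1}) (\<lambda>j. (8*k+7) - cLabel (8*k+7) j) ` qmap (8*k+7) (blocks k 7) ` {0..<8*k+7}) \<le> 3"
proof -
  note F = fam7[OF k]
  have cl: "cLabel (8*k+7) (8*k+7 - 1) = 4*k+4" using cLabel_last_odd[of "8*k+7"] by simp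
  show "local_antimagic (8*k+7) (blocks k 7) {0..<8*k+7} (cLabel (8*k+7)) \<and> card (vsum (8*k+7) (blocks k 7) {0..<8*k+7} (cLabel (8*k+7)) ` qmap (8*k+7) (blocks k 7) ` {0..<8*k+7}) \<le> 3"
  proof (rule upper_L0[OF F _ _ _])
    show "(\<Sum>c\<in>C07 k. gE {0..<8*k+7} (cLabel (8*k+7)) c + gE {0..<8*k+7} (cLabel (8*k+7)) (prd (8*k+7) c)) = 20*k+22"
      unfolding C07_def
    proof (rule Ztriple)
      show "gE {0..<8*k+7} (cLabel (8*k+7)) (0) + gE {0..<8*k+7} (cLabel (8*k+7)) (prd (8*k+7) (0)) = 4*k+5"
        using Z0_L0[of "8*k+7"] cl k by simp
      show "gE {0..<8*k+7} (cLabel (8*k+7)) (2*k+2) + gE {0..<8*k+7} (cLabel (8*k+7)) (prd (8*k+7) (2*k+2)) = (8*k+7)+2"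
        by (rule H0_ev) (use k in auto)
      show "gE {0..<8*k+7} (cLabel (8*k+7)) (6*k+5) + gE {0..<8*k+7} (cLabel (8*k+7)) (prd (8*k+7) (6*k+5)) = (8*k+7)+1"
        by (rule H0_od) (use k in auto)
    qed (use k in simp_all)
  qed (use k in simp_all)
  show "local_antimagic (8*k+7) (blocks k 7) ({0..<8*k+7}-{0}) (\<lambda>j. cLabel (8*k+7) j - 1) \<and> card (vsum (8*k+7) (blocks k 7) ({0..<8*k+7}-{0}) (\<lambda>j. cLabel (8*k+7) j - 1) ` qmap (8*k+7) (blocks k 7) ` {0..<8*k+7}) \<le> 3"
  proof (rule upper_L1[OF F _ _ _])
    show "(\<Sum>c\<in>C07 k. gE ({0..<8*k+7}-{0}) (\<lambda>j. cLabel (8*k+7) j - 1) c + gE ({0..<8*k+7}-{0}) (\<lambda>j. cLabel (8*k+7) j - 1) (prd (8*k+7) c)) = 20*k+16"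
      unfolding C07_def
    proof (rule Ztriple)
      show "gE ({0..<8*k+7}-{0}) (\<lambda>j. cLabel (8*k+7) j - 1) (0) + gE ({0..<8*k+7}-{0}) (\<lambda>j. cLabel (8*k+7) j - 1) (prd (8*k+7) (0)) = 4*k+3"
        using Z0_L1[of "8*k+7"] cl k by simp
      show "gE ({0..<8*k+7}-{0}) (\<lambda>j. cLabel (8*k+7) j - 1) (2*k+2) + gE ({0..<8*k+7}-{0}) (\<lambda>j. cLabel (8*k+7) j - 1) (prd (8*k+7) (2*k+2)) = 8*k+7"
        by (rule H1_ev) (use k in auto)
      show "gE ({0..<8*k+7}-{0}) (\<lambda>j. cLabel (8*k+7) j - 1) (6*k+5) + gE ({0..<8*k+7}-{0}) (\<lambda>j. cLabel (8*k+7) j - 1) (prd (8*k+7) (6*k+5)) = (8*k+7) - 1"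
        by (rule H1_od) (use k in auto)
    qed (use k in simp_all)
  qed (use k in simp_all)
  show "local_antimagic (8*k+7) (blocks k 7) ({0..<8*k+7}-{1}) (\<lambda>j. (8*k+7) - cLabel (8*k+7) j) \<and> card (vsum (8*k+7) (blocks k 7) ({0..<8*k+7}-{1}) (\<lambda>j. (8*k+7) - cLabel (8*k+7) j) ` qmap (8*k+7) (blocks k 7) ` {0..<8*k+7}) \<le> 3"
  proof (rule upper_L2[OF F _ _ _ _])
    show "3 \<le> 8*k+7" using k by simp
    show "(\<Sum>c\<in>C07 k. gE ({0..<8*k+7}-{1}) (\<lambda>j. (8*k+7) - cLabel (8*k+7) j) c + gE ({0..<8*k+7}-{1}) (\<lambda>j. (8*k+7) - cLabel (8*k+7) j) (prd (8*k+7) c)) = 28*k+20"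
      unfolding C07_def
    proof (rule Ztriple)
      show "gE ({0..<8*k+7}-{1}) (\<lambda>j. (8*k+7) - cLabel (8*k+7) j) (0) + gE ({0..<8*k+7}-{1}) (\<lambda>j. (8*k+7) - cLabel (8*k+7) j) (prd (8*k+7) (0)) = 12*k+9"
        using Z0_L2[of "8*k+7"] cl k by simp
      show "gE ({0..<8*k+7}-{1}) (\<lambda>j. (8*k+7) - cLabel (8*k+7) j) (2*k+2) + gE ({0..<8*k+7}-{1}) (\<lambda>j. (8*k+7) - cLabel (8*k+7) j) (prd (8*k+7) (2*k+2)) = (8*k+7) - 2"
        by (rule H2_ev) (use k in auto)
      show "gE ({0..<8*k+7}-{1}) (\<lambda>j. (8*k+7) - cLabel (8*k+7) j) (6*k+5) + gE ({0..<8*k+7}-{1}) (\<lambda>j. (8*k+7) - cLabel (8*k+7) j) (prd (8*k+7) (6*k+5)) = (8*k+7) - 1"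
        by (rule H2_od) (use k in auto)
    qed (use k in simp_all)
  qed (use k in simp_all)
qed

lemma thm7:
  assumes k: "1 \<le> k" and e: "e = 0 \<or> e = 1"
  shows "chi_la (8*k+7) (blocks k 7) {0..<8*k+7} = 3 \<and> chi_la (8*k+7) (blocks k 7) ({0..<8*k+7}-{e}) = 3"
proof (rule assemble[OF up7[OF k] _ _ _ e])
  fix f a b
  show "local_antimagic (8*k+7) (blocks k 7) {0..<8*k+7} f \<Longrightarrow> \<forall>i<8*k+7. vsum (8*k+7) (blocks k 7) {0..<8*k+7} f (qmap (8*k+7) (blocks k 7) i) \<in> {a, b} \<Longrightarrow> False"
    by (erule low_mixed[OF fam7[OF k], where z="2*k+2"]) (use k in \<open>auto simp: C07_def\<close>)
  show "local_antimagic (8*k+7) (blocks k 7) ({0..<8*k+7}-{0}) f \<Longrightarrow> \<forall>i<8*k+7. vsum (8*k+7) (blocks k 7) ({0..<8*k+7}-{0}) f (qmap (8*k+7) (blocks k 7) i) \<in> {a, b} \<Longrightarrow> False"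
    by (erule low_mixed[OF fam7[OF k], where z="2*k+2"]) (use k in \<open>auto simp: C07_def\<close>)
  show "local_antimagic (8*k+7) (blocks k 7) ({0..<8*k+7}-{1}) f \<Longrightarrow> \<forall>i<8*k+7. vsum (8*k+7) (blocks k 7) ({0..<8*k+7}-{1}) f (qmap (8*k+7) (blocks k 7) i) \<in> {a, b} \<Longrightarrow> False"
    by (erule low_mixed[OF fam7[OF k], where z="2*k+2"]) (use k in \<open>auto simp: C07_def\<close>)
qed

theorem mainTheorem13:
  fixes k t e :: nat
  assumes "k \<ge> 2" and "t \<in> {1..7}"
    and "e < cyc_n k t" and "cLabel (cyc_n k t) e \<in> {1, cyc_n k t}"
  shows "chi_la (cyc_n k t) (blocks k t) {0..<cyc_n k t} = 3
       \<and> chi_la (cyc_n k t) (blocks k t) ({0..<cyc_n k t} - {e}) = 3"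
proof -
  have k1: "1 \<le> k" using assms(1) by simp
  have n2: "2 \<le> cyc_n k t" using k1 by (simp add: cyc_n_def)
  have e: "e = 0 \<or> e = 1" by (rule e01[OF assms(3) n2 assms(4)])
  from assms(2) have "t = 1 \<or> t = 2 \<or> t = 3 \<or> t = 4 \<or> t = 5 \<or> t = 6 \<or> t = 7" by auto
  then show ?thesis
  proof (elim disjE)
    assume "t = 1" then show ?thesis using thm1[OF k1 e] by (simp add: cyc_n_def)
  next
    assume "t = 2" then show ?thesis using thm2[OF k1 e] by (simp add: cyc_n_def)
  next
    assume "t = 3" then show ?thesis using thm3[OF k1 e] by (simp add: cyc_n_def)
  next
    assume "t = 4" then show ?thesis using thm4[OF k1 e] by (simp add: cyc_n_def)
  next
    assume "t = 5" then show ?thesis using thm5[OF k1 e] by (simp add: cyc_n_def)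
  next
    assume "t = 6" then show ?thesis using thm6[OF k1 e] by (simp add: cyc_n_def)
  next
    assume "t = 7" then show ?thesis using thm7[OF k1 e] by (simp add: cyc_n_def)
  qed
qed

end
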